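(* $A_4(\frac13,\frac13,\frac13,0,0)$ has a unique rational solution of Type B, namely $(f_0,f_1,f_2,f_3,f_4)=(\frac t3,\frac t3,\frac t3,0,0)$.
   Context: The $A_4^{(1)}$ Painlevé equation $A_4(\alpha_0,\dots,\alpha_4)$ is the system for five functions $f_0,\dots,f_4$ of $t$ (indices in $\mathbb{Z}/5\mathbb{Z}$, ${}'=d/dt$): $f_j'=f_j(f_{j+1}-f_{j+2}+f_{j+3}-f_{j+4})+\alpha_j$ ($j=0,\dots,4$), $f_0+\dots+f_4=t$. A rational solution is a tuple of rational functions satisfying it. It is of Type B if for some $i$, $f_i,f_{i+1},f_{i+2}$ have a pole at $t=\infty$ and $f_{i+3},f_{i+4}$ are regular there. *)

theory Defs
  imports "HOL-Computational_Algebra.Computational_Algebra"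
    "HOL-Computational_Algebra.Normalized_Fraction" "HOL-Computational_Algebra.Field_as_Ring"
begin

type_synonym ratfun = "complex poly fract"

definition rconst :: "complex \<Rightarrow> ratfun" where
  "rconst c = Fract [:c:] 1"

definition tvar :: ratfun where
  "tvar = Fract [:0, 1:] 1"

definition rderiv :: "ratfun \<Rightarrow> ratfun" where
  "rderiv f = (case quot_of_fract f of (p, q) \<Rightarrow> Fract (pderiv p * q - p * pderiv q) (q * q))"

definition pole_at_inf :: "ratfun \<Rightarrow> bool" where
  "pole_at_inf f = (case quot_of_fract f of (p, q) \<Rightarrow> degree q < degree p)"

definition regular_at_inf :: "ratfun \<Rightarrow> bool" where
  "regular_at_inf f = (\<not> pole_at_inf f)"

text \<open>Rational solution of A4(alpha_0,...,alpha_4); indices taken mod 5, only f 0..f 4 matter.\<close>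
definition A4_rational_solution :: "(nat \<Rightarrow> complex) \<Rightarrow> (nat \<Rightarrow> ratfun) \<Rightarrow> bool" where
  "A4_rational_solution \<alpha> f \<longleftrightarrow>
     (\<forall>j<5. rderiv (f j) =
        f j * (f ((j+1) mod 5) - f ((j+2) mod 5) + f ((j+3) mod 5) - f ((j+4) mod 5))
        + rconst (\<alpha> j))
     \<and> (\<Sum>j<5. f j) = tvar"

definition type_B :: "(nat \<Rightarrow> ratfun) \<Rightarrow> bool" where
  "type_B f \<longleftrightarrow> (\<exists>i<5. pole_at_inf (f i) \<and> pole_at_inf (f ((i+1) mod 5))
      \<and> pole_at_inf (f ((i+2) mod 5))
      \<and> regular_at_inf (f ((i+3) mod 5)) \<and> regular_at_inf (f ((i+4) mod 5)))"

end

theory Submission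
  imports Defs
begin

unbundle Formal_Power_Series.fps_syntax
unbundle Formal_Laurent_Series.fps_syntax

definition Ev :: "complex fls \<Rightarrow> complex poly \<Rightarrow> complex fls" where
  "Ev x p = poly (map_poly fls_const p) x"

lemma Ev_pCons: "Ev x (pCons a p) = fls_const a + x * Ev x p"
  by (simp add: Ev_def map_poly_pCons)

lemma Ev_0 [simp]: "Ev x 0 = 0"
  by (simp add: Ev_def)

lemma Ev_const [simp]: "Ev x [:a:] = fls_const a"
  by (simp add: Ev_pCons)

lemma Ev_1 [simp]: "Ev x 1 = 1"
  by (simp add: one_pCons Ev_pCons del: pCons_one)

lemma Ev_add: "Ev x (p + q) = Ev x p + Ev x q"
proof (induction p arbitrary: q rule: pCons_induct)
  case 0 then show ?case by simp
next
  case (pCons a p)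
  show ?case
  proof (cases q)
    case (pCons b q')
    have "Ev x (p + q') = Ev x p + Ev x q'" using pCons.IH[of q'] by (simp add: add.commute)
    then show ?thesis using pCons
      by (simp add: Ev_pCons algebra_simps fls_plus_const[symmetric])
  qed
qed

lemma Ev_smult: "Ev x (smult a p) = fls_const a * Ev x p"
  by (induction p rule: pCons_induct) (simp_all add: Ev_pCons algebra_simps)

lemma Ev_pCons0: "Ev x (pCons 0 p) = x * Ev x p"
  by (simp add: Ev_pCons)

lemma Ev_mult: "Ev x (p * q) = Ev x p * Ev x q"
  by (induction p rule: pCons_induct)
     (simp_all add: Ev_pCons Ev_add Ev_smult Ev_pCons0 algebra_simps)

lemma Ev_uminus: "Ev x (- p) = - Ev x p"
  using Ev_add[of x p "-p"] by (simp add: eq_neg_iff_add_eq_0 add.commute)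

lemma Ev_diff: "Ev x (p - q) = Ev x p - Ev x q"
  using Ev_add[of x p "-q"] Ev_uminus[of x q] by simp

lemma Ev_pderiv:
  assumes Dadd: "\<And>f g. D (f + g) = D f + D g"
    and Dmult: "\<And>f g. D (f * g) = D f * g + f * D g"
    and Dconst: "\<And>c. D (fls_const c) = 0"
  shows "D (Ev x p) = Ev x (pderiv p) * D x"
proof (induction p rule: pCons_induct)
  case 0
  have "D 0 = 0" using Dconst[of 0] by simp
  then show ?case by simp
next
  case (pCons a p)
  show ?case
    by (simp add: Ev_pCons pderiv_pCons Ev_add Ev_pCons0 Dadd Dmult Dconst pCons.IH algebra_simps)
qed

definition E :: "complex fls \<Rightarrow> ratfun \<Rightarrow> complex fls" where
  "E x f = (case quot_of_fract f of (p, q) \<Rightarrow> Ev x p / Ev x q)"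

definition nzx :: "complex fls \<Rightarrow> bool" where
  "nzx x \<longleftrightarrow> (\<forall>q. q \<noteq> 0 \<longrightarrow> Ev x q \<noteq> 0)"

lemma E_Fract:
  assumes "nzx x" "q \<noteq> 0"
  shows "E x (Fract p q) = Ev x p / Ev x q"
proof -
  obtain p' q' where pq: "quot_of_fract (Fract p q) = (p', q')" by fastforce
  have q': "q' \<noteq> 0" using snd_quot_of_fract_nonzero[of "Fract p q"] pq by simp
  have "Fract p' q' = Fract p q" using Fract_quot_of_fract[of "Fract p q"] pq by simp
  then have "p' * q = p * q'" using q' assms(2) by (simp add: eq_fract)
  then have "Ev x p' * Ev x q = Ev x p * Ev x q'" by (simp add: Ev_mult[symmetric])
  moreover have "Ev x q \<noteq> 0" "Ev x q' \<noteq> 0" using assms q' by (auto simp: nzx_def)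
  ultimately show ?thesis using pq by (simp add: E_def field_simps)
qed

lemma E_add: assumes "nzx x" shows "E x (f + g) = E x f + E x g"
proof -
  obtain a b where f: "f = Fract a b" "b \<noteq> 0" by (cases f) auto
  obtain c d where g: "g = Fract c d" "d \<noteq> 0" by (cases g) auto
  have "Ev x b \<noteq> 0" "Ev x d \<noteq> 0" using assms f g by (auto simp: nzx_def)
  then show ?thesis using f g assms
    by (simp add: E_Fract Ev_add Ev_mult field_simps)
qed

lemma E_mult: assumes "nzx x" shows "E x (f * g) = E x f * E x g"
proof -
  obtain a b where f: "f = Fract a b" "b \<noteq> 0" by (cases f) auto
  obtain c d where g: "g = Fract c d" "d \<noteq> 0" by (cases g) auto
  have "Ev x b \<noteq> 0" "Ev x d \<noteq> 0" using assms f g by (auto simp: nzx_def)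
  then show ?thesis using f g assms
    by (simp add: E_Fract Ev_mult field_simps)
qed

lemma E_0 [simp]: "E x 0 = 0"
  by (simp add: E_def)

lemma E_1: "E x 1 = 1"
  by (simp add: E_def)

lemma E_uminus: assumes "nzx x" shows "E x (- f) = - E x f"
  using E_add[OF assms, of f "-f"] by (simp add: eq_neg_iff_add_eq_0 add.commute)

lemma E_diff: assumes "nzx x" shows "E x (f - g) = E x f - E x g"
  using E_add[OF assms, of f "-g"] E_uminus[OF assms, of g] by simp

lemma E_rconst: assumes "nzx x" shows "E x (rconst c) = fls_const c"
  using assms by (simp add: rconst_def E_Fract)

lemma E_tvar: assumes "nzx x" shows "E x tvar = x"
  using assms by (simp add: tvar_def E_Fract Ev_pCons)

lemma E_eq0: assumes "nzx x" "E x f = 0" shows "f = 0"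
proof -
  obtain a b where f: "f = Fract a b" "b \<noteq> 0" by (cases f) auto
  have "Ev x b \<noteq> 0" using assms f by (auto simp: nzx_def)
  then have "Ev x a = 0" using assms f by (simp add: E_Fract)
  then have "a = 0" using assms(1) by (auto simp: nzx_def)
  then show ?thesis using f by (metis Zero_fract_def eq_fract(3))
qed

lemma E_inj: assumes "nzx x" "E x f = E x g" shows "f = g"
  using E_eq0[OF assms(1), of "f - g"] assms by (simp add: E_diff)

lemma E_inverse: assumes "nzx x" shows "E x (inverse f) = inverse (E x f)"
proof (cases "f = 0")
  case True then show ?thesis by simp
next
  case False
  have "E x (inverse f) * E x f = 1" using E_mult[OF assms, of "inverse f" f] False
    by (simp add: E_1)
  then show ?thesis by (metis inverse_unique mult.commute)
qed

lemma D_div: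
  fixes D :: "complex fls \<Rightarrow> complex fls"
  assumes Dmult: "\<And>f g. D (f * g) = D f * g + f * D g"
    and "b \<noteq> 0"
  shows "D (a / b) = (D a * b - a * D b) / (b * b)"
proof -
  have "a = (a / b) * b" using assms(2) by simp
  then have "D a = D (a / b) * b + (a / b) * D b" by (metis Dmult)
  then show ?thesis using assms(2) by (simp add: field_simps)
qed

lemma E_rderiv:
  assumes "nzx x"
    and Dadd: "\<And>f g. D (f + g) = D f + D g"
    and Dmult: "\<And>f g. D (f * g) = D f * g + f * D g"
    and Dconst: "\<And>c. D (fls_const c) = 0"
    and Dx: "D x = 1"
  shows "E x (rderiv f) = D (E x f)"
proof -
  obtain p q where pq: "quot_of_fract f = (p, q)" by fastforce
  have q: "q \<noteq> 0" using snd_quot_of_fract_nonzero[of f] pq by simp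
  have nq: "Ev x q \<noteq> 0" using assms(1) q by (auto simp: nzx_def)
  have dp: "D (Ev x p) = Ev x (pderiv p)" and dq: "D (Ev x q) = Ev x (pderiv q)"
    using Ev_pderiv[OF Dadd Dmult Dconst] Dx by auto
  have "E x (rderiv f) = E x (Fract (pderiv p * q - p * pderiv q) (q * q))"
    by (simp add: rderiv_def pq)
  also have "\<dots> = (Ev x (pderiv p) * Ev x q - Ev x p * Ev x (pderiv q)) / (Ev x q * Ev x q)"
    using assms(1) q by (simp add: E_Fract Ev_mult Ev_diff)
  also have "\<dots> = D (Ev x p / Ev x q)"
    by (simp add: D_div[OF Dmult nq] dp dq)
  also have "\<dots> = D (E x f)" by (simp add: E_def pq)
  finally show ?thesis .
qed

lemma Ev_power_aux: "Ev x (p ^ n) = Ev x p ^ n"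
  by (induction n) (simp_all add: Ev_mult)

definition xz :: "complex \<Rightarrow> complex fls" where
  "xz z = fls_const z + fls_X"

lemma Ev_fin: "\<exists>F. Ev (xz z) p = fps_to_fls F \<and> F $ 0 = poly p z"
proof (induction p rule: pCons_induct)
  case 0 then show ?case by (intro exI[of _ 0]) simp
next
  case (pCons a p)
  then obtain F where F: "Ev (xz z) p = fps_to_fls F" "F $ 0 = poly p z" by blast
  have "Ev (xz z) (pCons a p) = fps_to_fls (fps_const a + (fps_const z + fps_X) * F)"
    using F(1) by (simp add: Ev_pCons xz_def fls_times_fps_to_fls)
  moreover have "(fps_const a + (fps_const z + fps_X) * F) $ 0 = poly (pCons a p) z"
    using F by (simp add: fps_mult_nth)
  ultimately show ?case by blast
qed

lemma Ev_fin_sub: "\<forall>k<0. (Ev (xz z) p) $$ k = 0"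
  using Ev_fin[of z p] by auto

lemma Ev_fin_nth0: "(Ev (xz z) p) $$ 0 = poly p z"
  using Ev_fin[of z p] by auto

lemma Ev_fin_lin: "Ev (xz z) [:-z, 1:] = fls_X"
  by (simp add: Ev_pCons xz_def)

lemma nzx_fin: "nzx (xz z)"
  unfolding nzx_def
proof (intro allI impI)
  fix q :: "complex poly" assume q: "q \<noteq> 0"
  obtain r where r: "q = [:-z, 1:] ^ order z q * r" "\<not> [:-z, 1:] dvd r"
    using order_decomp[OF q] by blast
  have "poly r z \<noteq> 0" using r(2) by (simp add: poly_eq_0_iff_dvd)
  then have "Ev (xz z) r \<noteq> 0" using Ev_fin_nth0[of z r] by (metis fls_nonzeroI)
  moreover have "Ev (xz z) q = fls_X ^ order z q * Ev (xz z) r"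
    by (subst r(1)) (simp add: Ev_mult Ev_fin_lin Ev_power_aux)
  ultimately show "Ev (xz z) q \<noteq> 0" by simp
qed


lemma E_fin_regular:
  assumes "quot_of_fract f = (p, q)" "poly q z \<noteq> 0"
  shows "\<forall>k<0. (E (xz z) f) $$ k = 0"
proof (intro allI impI)
  fix k :: int assume k: "k < 0"
  have eq: "E (xz z) f = Ev (xz z) p / Ev (xz z) q" by (simp add: E_def assms(1))
  have q0: "(Ev (xz z) q) $$ 0 \<noteq> 0" using assms(2) by (simp add: Ev_fin_nth0)
  have sq: "fls_subdegree (Ev (xz z) q) = 0"
    using q0 Ev_fin_sub[of z q] by (intro fls_subdegree_eqI) auto
  show "(E (xz z) f) $$ k = 0"
  proof (cases "Ev (xz z) p = 0")
    case True then show ?thesis by (simp add: eq)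
  next
    case False
    have "0 \<le> fls_subdegree (Ev (xz z) p)"
      using False Ev_fin_sub[of z p] by (intro fls_subdegree_geI) auto
    then show ?thesis using fls_divide_nth_below[of k "Ev (xz z) p" "Ev (xz z) q"] k sq
      by (simp add: eq)
  qed
qed

lemma E_fin_pole:
  assumes "quot_of_fract f = (p, q)" "poly q z = 0"
  shows "\<exists>k<0. (E (xz z) f) $$ k \<noteq> 0"
proof -
  have eq: "E (xz z) f = Ev (xz z) p / Ev (xz z) q" by (simp add: E_def assms(1))
  have q: "q \<noteq> 0" using snd_quot_of_fract_nonzero[of f] assms(1) by simp
  have cop: "coprime p q" using coprime_quot_of_fract[of f] assms(1) by simp
  have "poly p z \<noteq> 0"
  proof
    assume "poly p z = 0"
    then have "[:-z, 1:] dvd p" "[:-z, 1:] dvd q" using assms(2) by (auto simp: poly_eq_0_iff_dvd)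
    then have "is_unit [:-z, 1:]" using cop by (meson coprime_common_divisor)
    then show False by (simp add: is_unit_iff_degree)
  qed
  then have p0: "(Ev (xz z) p) $$ 0 \<noteq> 0" by (simp add: Ev_fin_nth0)
  have sp: "fls_subdegree (Ev (xz z) p) = 0"
    using p0 Ev_fin_sub[of z p] by (intro fls_subdegree_eqI) auto
  have nq: "Ev (xz z) q \<noteq> 0" using nzx_fin q by (auto simp: nzx_def)
  have np: "Ev (xz z) p \<noteq> 0" using p0 by (metis fls_nonzeroI)
  have "1 \<le> fls_subdegree (Ev (xz z) q)"
  proof (rule fls_subdegree_geI[OF nq])
    fix k :: int assume "k < 1"
    then have "k < 0 \<or> k = 0" by linarith
    then show "(Ev (xz z) q) $$ k = 0"
      using Ev_fin_sub[of z q] Ev_fin_nth0[of z q] assms(2) by auto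
  qed
  then have s: "fls_subdegree (E (xz z) f) < 0"
    using fls_divide_subdegree[OF np nq] sp by (simp add: eq)
  have "E (xz z) f \<noteq> 0" using np nq by (simp add: eq)
  then have "(E (xz z) f) $$ fls_subdegree (E (xz z) f) \<noteq> 0" by simp
  then show ?thesis using s by blast
qed

lemma regular_everywhere_poly:
  assumes "\<forall>z. \<forall>k<0. (E (xz z) f) $$ k = 0"
  shows "snd (quot_of_fract f) = 1"
proof -
  obtain p q where pq: "quot_of_fract f = (p, q)" by fastforce
  have q: "q \<noteq> 0" using snd_quot_of_fract_nonzero[of f] pq by simp
  have "\<not> (\<exists>z. poly q z = 0)" using E_fin_pole[OF pq] assms by blast
  then have "\<exists>a l. a \<noteq> 0 \<and> l = 0 \<and> q = pCons a l"
    using fundamental_theorem_of_algebra_alt[of q] by blast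
  then obtain a where a: "a \<noteq> 0" "q = [:a:]" by auto
  have "unit_factor q = 1" using unit_factor_snd_quot_of_fract[of f] pq by simp
  then have "q = 1" using a by (simp add: unit_factor_poly_def)
  then show ?thesis using pq by simp
qed

definition Dinf :: "complex fls \<Rightarrow> complex fls" where
  "Dinf g = - (fls_X * fls_X) * fls_deriv g"

lemma Ev_inf_nth: "(Ev fls_X_inv p) $$ n = (if n \<le> 0 then coeff p (nat (- n)) else 0)"
proof (induction p arbitrary: n rule: pCons_induct)
  case 0 then show ?case by simp
next
  case (pCons a p)
  have "(Ev fls_X_inv (pCons a p)) $$ n = (if n = 0 then a else 0) + (Ev fls_X_inv p) $$ (n + 1)"
    by (simp add: Ev_pCons fls_X_inv_times_conv_shift)
  also have "\<dots> = (if n \<le> 0 then coeff (pCons a p) (nat (- n)) else 0)"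
  proof (cases "n < 0")
    case True
    then have "nat (- n) = Suc (nat (- (n + 1)))" by linarith
    then show ?thesis using True pCons.IH[of "n+1"] by simp
  next
    case False
    then show ?thesis using pCons.IH[of "n+1"] by (cases "n = 0") auto
  qed
  finally show ?case .
qed


lemma Ev_inf_sub:
  assumes "p \<noteq> 0" shows "fls_subdegree (Ev fls_X_inv p) = - int (degree p)"
proof (rule fls_subdegree_eqI)
  show "(Ev fls_X_inv p) $$ (- int (degree p)) \<noteq> 0" using assms by (simp add: Ev_inf_nth)
  fix k :: int assume "k < - int (degree p)"
  then have "degree p < nat (- k)" by linarith
  then show "(Ev fls_X_inv p) $$ k = 0" by (simp add: Ev_inf_nth coeff_eq_0)
qed

lemma nzx_inf: "nzx fls_X_inv"
  unfolding nzx_def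
proof (intro allI impI)
  fix q :: "complex poly" assume "q \<noteq> 0"
  then have "(Ev fls_X_inv q) $$ (- int (degree q)) \<noteq> 0" by (simp add: Ev_inf_nth)
  then show "Ev fls_X_inv q \<noteq> 0" by (metis fls_nonzeroI)
qed

lemma Dinf_add: "Dinf (f + g) = Dinf f + Dinf g"
  by (simp add: Dinf_def algebra_simps)
lemma Dinf_mult: "Dinf (f * g) = Dinf f * g + f * Dinf g"
  by (simp add: Dinf_def algebra_simps)
lemma Dinf_const: "Dinf (fls_const c) = 0"
  by (simp add: Dinf_def)
lemma Dinf_Xinv: "Dinf fls_X_inv = (1 :: complex fls)"
proof -
  have "fls_X * fls_X_inv = (1 :: complex fls)"
    by (simp add: fls_X_times_conv_shift fls_X_inv_conv_shift_1)
  then show ?thesis by (simp add: Dinf_def power2_eq_square algebra_simps)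
qed

lemma Dinf_nth: "(Dinf g) $$ n = - of_int (n - 1) * g $$ (n - 1)"
proof -
  have "(fls_X * (fls_X * fls_deriv g)) $$ n = (fls_deriv g) $$ (n - 2)"
    by (simp add: fls_X_times_conv_shift(1))
  then show ?thesis by (simp add: Dinf_def mult.assoc algebra_simps)
qed

lemma E_inf_rderiv: "E fls_X_inv (rderiv f) = Dinf (E fls_X_inv f)"
  by (rule E_rderiv[OF nzx_inf Dinf_add Dinf_mult Dinf_const Dinf_Xinv])

lemma E_fin_rderiv: "E (xz z) (rderiv f) = fls_deriv (E (xz z) f)"
  by (rule E_rderiv[OF nzx_fin]) (simp_all add: xz_def algebra_simps)

lemma E_inf_pole:
  assumes "pole_at_inf f" shows "\<exists>k<0. (E fls_X_inv f) $$ k \<noteq> 0"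
proof -
  obtain p q where pq: "quot_of_fract f = (p, q)" by fastforce
  have q: "q \<noteq> 0" using snd_quot_of_fract_nonzero[of f] pq by simp
  have d: "degree q < degree p" using assms pq by (simp add: pole_at_inf_def)
  then have p: "p \<noteq> 0" by auto
  have nq: "Ev fls_X_inv q \<noteq> 0" "Ev fls_X_inv p \<noteq> 0" using nzx_inf q p by (auto simp: nzx_def)
  have eq: "E fls_X_inv f = Ev fls_X_inv p / Ev fls_X_inv q" by (simp add: E_def pq)
  have s: "fls_subdegree (E fls_X_inv f) < 0"
    using fls_divide_subdegree[OF nq(2) nq(1)] Ev_inf_sub[OF p] Ev_inf_sub[OF q] d by (simp add: eq)
  have "E fls_X_inv f \<noteq> 0" using nq by (simp add: eq)
  then have "(E fls_X_inv f) $$ fls_subdegree (E fls_X_inv f) \<noteq> 0" by simp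
  then show ?thesis using s by blast
qed

lemma E_inf_regular:
  assumes "regular_at_inf f" shows "\<forall>k<0. (E fls_X_inv f) $$ k = 0"
proof (intro allI impI)
  fix k :: int assume k: "k < 0"
  obtain p q where pq: "quot_of_fract f = (p, q)" by fastforce
  have q: "q \<noteq> 0" using snd_quot_of_fract_nonzero[of f] pq by simp
  have d: "degree p \<le> degree q" using assms pq by (simp add: regular_at_inf_def pole_at_inf_def)
  have eq: "E fls_X_inv f = Ev fls_X_inv p / Ev fls_X_inv q" by (simp add: E_def pq)
  show "(E fls_X_inv f) $$ k = 0"
  proof (cases "p = 0")
    case True then show ?thesis by (simp add: eq)
  next
    case p: False
    have nq: "Ev fls_X_inv q \<noteq> 0" "Ev fls_X_inv p \<noteq> 0" using nzx_inf q p by (auto simp: nzx_def)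
    have s: "fls_subdegree (E fls_X_inv f) \<ge> 0"
      using fls_divide_subdegree[OF nq(2) nq(1)] Ev_inf_sub[OF p] Ev_inf_sub[OF q] d by (simp add: eq)
    then show ?thesis using k by simp
  qed
qed

lemma E_inf_poly1:
  assumes "snd (quot_of_fract f) = 1" shows "(E fls_X_inv f) $$ 1 = 0"
proof -
  obtain p where pq: "quot_of_fract f = (p, 1)" using assms by (metis prod.collapse)
  show ?thesis by (simp add: E_def pq Ev_inf_nth)
qed

lemma XXinv: "fls_X * fls_X_inv = (1 :: complex fls)"
  by (simp add: fls_X_times_conv_shift fls_X_inv_conv_shift_1)

lemma E_sum: assumes "nzx x" shows "E x (\<Sum>z\<in>A. g z) = (\<Sum>z\<in>A. E x (g z))"
  by (induction A rule: infinite_finite_induct) (simp_all add: E_add[OF assms])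

definition rho :: "complex \<Rightarrow> ratfun" where
  "rho z = inverse (tvar - rconst z)"

lemma E_rho_fin: "E (xz w) (rho z) = inverse (fls_const (w - z) + fls_X)"
proof -
  have "E (xz w) (rho z) = inverse (xz w - fls_const z)"
    by (simp add: rho_def E_inverse[OF nzx_fin] E_diff[OF nzx_fin] E_tvar[OF nzx_fin]
      E_rconst[OF nzx_fin])
  also have "xz w - fls_const z = fls_const (w - z) + fls_X"
    by (simp add: xz_def fls_minus_const[symmetric] algebra_simps)
  finally show ?thesis .
qed

lemma E_rho_same: "E (xz z) (rho z) = fls_X_inv"
proof -
  have "inverse (fls_X :: complex fls) = fls_X_inv"
    using XXinv by (metis inverse_unique)
  then show ?thesis by (simp add: E_rho_fin)
qed

lemma E_rho_other:
  assumes "w \<noteq> z" shows "\<forall>k<0. (E (xz w) (rho z)) $$ k = 0"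
proof -
  let ?u = "fls_const (w - z) + (fls_X :: complex fls)"
  have u0: "?u $$ 0 \<noteq> 0" using assms by simp
  have "fls_subdegree ?u = 0"
    by (rule fls_subdegree_eqI[OF u0]) simp
  then have "fls_subdegree (inverse ?u) = 0" by simp
  then show ?thesis by (simp add: E_rho_fin)
qed

lemma E_rho_inf: "(E fls_X_inv (rho z)) $$ 1 = 1"
proof -
  let ?u = "fls_X_inv - fls_const z :: complex fls"
  have u: "?u $$ (-1) = 1" by simp
  have su: "fls_subdegree ?u = -1" by (rule fls_subdegree_eqI) simp_all
  have "?u \<noteq> 0" using u by (metis fls_nonzeroI zero_neq_one)
  have "inverse ?u $$ 1 = 1" using fls_inverse_base[OF \<open>?u \<noteq> 0\<close>] su by simp
  then show ?thesis
    by (simp add: rho_def E_inverse[OF nzx_inf] E_diff[OF nzx_inf] E_tvar[OF nzx_inf]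
      E_rconst[OF nzx_inf])
qed

lemma residue_sum:
  assumes reg: "\<forall>z. \<forall>k < -1. (E (xz z) f) $$ k = 0"
  shows "(E fls_X_inv f) $$ 1 =
    (\<Sum>z\<in>{z. poly (snd (quot_of_fract f)) z = 0}. (E (xz z) f) $$ (-1))"
proof -
  obtain p q where pq: "quot_of_fract f = (p, q)" by fastforce
  have q: "q \<noteq> 0" using snd_quot_of_fract_nonzero[of f] pq by simp
  define Z where "Z = {z. poly q z = 0}"
  have fin: "finite Z" using poly_roots_finite[OF q] by (simp add: Z_def)
  define c where "c z = (E (xz z) f) $$ (-1)" for z
  define G where "G = f - (\<Sum>z\<in>Z. rconst (c z) * rho z)"
  have EG: "E x G = E x f - (\<Sum>z\<in>Z. fls_const (c z) * E x (rho z))" if "nzx x" for x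
    using that by (simp add: G_def E_diff E_sum E_mult E_rconst)
  have "\<forall>w. \<forall>k<0. (E (xz w) G) $$ k = 0"
  proof (intro allI impI)
    fix w :: complex and k :: int assume k: "k < 0"
    have "(E (xz w) G) $$ k = (E (xz w) f) $$ k - (\<Sum>z\<in>Z. c z * (E (xz w) (rho z)) $$ k)"
      by (simp add: EG[OF nzx_fin] fls_nth_sum)
    also have "\<dots> = 0"
    proof (cases "w \<in> Z")
      case True
      have "(\<Sum>z\<in>Z. c z * (E (xz w) (rho z)) $$ k) =
            c w * (E (xz w) (rho w)) $$ k + (\<Sum>z\<in>Z-{w}. c z * (E (xz w) (rho z)) $$ k)"
        using fin True by (simp add: sum.remove)
      also have "(\<Sum>z\<in>Z-{w}. c z * (E (xz w) (rho z)) $$ k) = 0"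
        using E_rho_other k by (intro sum.neutral) auto
      finally have s: "(\<Sum>z\<in>Z. c z * (E (xz w) (rho z)) $$ k) = (if k = -1 then c w else 0)"
        by (simp add: E_rho_same)
      show ?thesis
      proof (cases "k = -1")
        case True then show ?thesis using s by (simp add: c_def)
      next
        case False then show ?thesis using s reg k by simp
      qed
    next
      case False
      then have "w \<noteq> z" if "z \<in> Z" for z using that by auto
      then have "(\<Sum>z\<in>Z. c z * (E (xz w) (rho z)) $$ k) = 0"
        using E_rho_other k by (intro sum.neutral) auto
      moreover have "(E (xz w) f) $$ k = 0"
        using E_fin_regular[OF pq, of w] False k by (simp add: Z_def)
      ultimately show ?thesis by simp
    qed
    finally show "(E (xz w) G) $$ k = 0" .
  qed
  then have "(E fls_X_inv G) $$ 1 = 0"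
    using regular_everywhere_poly E_inf_poly1 by blast
  then have "(E fls_X_inv f) $$ 1 = (\<Sum>z\<in>Z. c z * (E fls_X_inv (rho z)) $$ 1)"
    by (simp add: EG[OF nzx_inf] fls_nth_sum)
  also have "\<dots> = (\<Sum>z\<in>Z. c z)" by (simp add: E_rho_inf)
  finally show ?thesis by (simp add: Z_def c_def pq)
qed

lemma prod_low:
  fixes f g :: "complex fls"
  assumes "\<forall>k<a. f $$ k = 0" "\<forall>k<b. g $$ k = 0"
  shows "(f * g) $$ (a + b) = f $$ a * g $$ b"
    and "n < a + b \<Longrightarrow> (f * g) $$ n = 0"
proof -
  have main: "(f * g) $$ (a + b) = f $$ a * g $$ b \<and> (n < a + b \<longrightarrow> (f * g) $$ n = 0)"
  proof (cases "f = 0 \<or> g = 0")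
    case True then show ?thesis by auto
  next
    case False
    then have nz: "f \<noteq> 0" "g \<noteq> 0" by auto
    have sf: "a \<le> fls_subdegree f" using assms(1) nz by (intro fls_subdegree_geI) auto
    have sg: "b \<le> fls_subdegree g" using assms(2) nz by (intro fls_subdegree_geI) auto
    have A: "n < a + b \<longrightarrow> (f * g) $$ n = 0" using sf sg fls_times_nth_eq0[of n f g] by auto
    have B: "(f * g) $$ (a + b) = f $$ a * g $$ b"
    proof (cases "a = fls_subdegree f \<and> b = fls_subdegree g")
      case True then show ?thesis using fls_times_base[of f g] by simp
    next
      case False
      then have "a < fls_subdegree f \<or> b < fls_subdegree g" using sf sg by auto
      then show ?thesis using sf sg fls_times_nth_eq0[of "a+b" f g] by auto
    qed
    show ?thesis using A B by blast
  qed
  show "(f * g) $$ (a + b) = f $$ a * g $$ b" using main by blast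
  show "n < a + b \<Longrightarrow> (f * g) $$ n = 0" using main by blast
qed

lemma lead_step:
  fixes F X :: "complex fls"
  assumes low: "\<forall>k<d. F $$ k = 0" and nz: "F $$ d \<noteq> 0" and d: "d < 0"
    and lowX: "\<forall>k<d. X $$ k = 0"
    and eq: "fls_deriv F = F * X + fls_const \<alpha>"
  shows "\<forall>k < -1. X $$ k = 0" "X $$ (-1) = of_int d"
proof -
  have coef: "(fls_deriv F) $$ n = (F * X) $$ n + (fls_const \<alpha>) $$ n" for n
    by (simp only: eq fls_plus_nth)
  have sF: "fls_subdegree F = d" using low nz by (intro fls_subdegree_eqI) auto
  show A: "\<forall>k < -1. X $$ k = 0"
  proof (rule ccontr)
    assume "\<not> (\<forall>k < -1. X $$ k = 0)"
    then obtain k where k: "k < -1" "X $$ k \<noteq> 0" by auto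
    then have X0: "X \<noteq> 0" by auto
    define e where "e = fls_subdegree X"
    have e: "e \<le> k" using k fls_subdegree_leI unfolding e_def by blast
    have "d \<le> e" using lowX X0 unfolding e_def by (intro fls_subdegree_geI) auto
    have Xe: "X $$ e \<noteq> 0" using X0 unfolding e_def by simp
    have F0: "F $$ (d + e + 1) = 0" using low e k by simp
    have "(fls_deriv F) $$ (d + e) = 0"
      by (simp only: fls_deriv_nth F0 mult_zero_right)
    moreover have "(F * X) $$ (d + e) = F $$ d * X $$ e"
      using fls_times_base[of F X] sF unfolding e_def by simp
    moreover have "(fls_const \<alpha>) $$ (d + e) = 0" using d e k by simp
    ultimately have "F $$ d * X $$ e = 0" using coef[of "d+e"] F0 by simp
    then show False using nz Xe by simp
  qed
  have lowX': "\<forall>k < -1. X $$ k = 0" using A .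
  have "(fls_deriv F) $$ (d - 1) = of_int d * F $$ d" by simp
  moreover have "(F * X) $$ (d + -1) = F $$ d * X $$ (-1)"
    using prod_low(1)[OF low lowX'] .
  moreover have "(fls_const \<alpha>) $$ (d - 1) = 0" using d by simp
  ultimately have "of_int d * F $$ d = F $$ d * X $$ (-1)" using coef[of "d-1"] by simp
  then show "X $$ (-1) = of_int d" using nz by simp
qed

lemma alg1r:
  fixes xa xb xc xd xe ya yb yc yd ye :: real
  assumes "(xa \<noteq> 0 \<or> ya \<noteq> 0) \<longrightarrow> (xb - xc + xd - xe = -1 \<and> yb - yc + yd - ye = 0)"
    "(xb \<noteq> 0 \<or> yb \<noteq> 0) \<longrightarrow> (xc - xd + xe - xa = -1 \<and> yc - yd + ye - ya = 0)"
    "(xc \<noteq> 0 \<or> yc \<noteq> 0) \<longrightarrow> (xd - xe + xa - xb = -1 \<and> yd - ye + ya - yb = 0)"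
    "(xd \<noteq> 0 \<or> yd \<noteq> 0) \<longrightarrow> (xe - xa + xb - xc = -1 \<and> ye - ya + yb - yc = 0)"
    "(xe \<noteq> 0 \<or> ye \<noteq> 0) \<longrightarrow> (xa - xb + xc - xd = -1 \<and> ya - yb + yc - yd = 0)"
    "xa + xb + xc + xd + xe = 0" "ya + yb + yc + yd + ye = 0"
  shows "yc = 0 \<and> (xc = 0 \<or> xc = 1 \<or> xc = -1 \<or> xc = 3 \<or> xc = -3)"
  using assms by smt

lemma alg0r:
  fixes xa xb xc xd xe ya yb yc yd ye :: real
  assumes "(xa \<noteq> 0 \<or> ya \<noteq> 0) \<longrightarrow> (xb - xc + xd - xe = 0 \<and> yb - yc + yd - ye = 0)"
    "(xb \<noteq> 0 \<or> yb \<noteq> 0) \<longrightarrow> (xc - xd + xe - xa = 0 \<and> yc - yd + ye - ya = 0)"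
    "(xc \<noteq> 0 \<or> yc \<noteq> 0) \<longrightarrow> (xd - xe + xa - xb = 0 \<and> yd - ye + ya - yb = 0)"
    "(xd \<noteq> 0 \<or> yd \<noteq> 0) \<longrightarrow> (xe - xa + xb - xc = 0 \<and> ye - ya + yb - yc = 0)"
    "(xe \<noteq> 0 \<or> ye \<noteq> 0) \<longrightarrow> (xa - xb + xc - xd = 0 \<and> ya - yb + yc - yd = 0)"
    "xa + xb + xc + xd + xe = 0" "ya + yb + yc + yd + ye = 0"
  shows "xa = 0 \<and> ya = 0 \<and> xb = 0 \<and> yb = 0 \<and> xc = 0 \<and> yc = 0 \<and> xd = 0 \<and> yd = 0 \<and> xe = 0 \<and> ye = 0"
  using assms by smt

lemma alg1c:
  fixes r0 r1 r2 r3 r4 :: complex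
  assumes "r0 \<noteq> 0 \<longrightarrow> r1 - r2 + r3 - r4 = -1"
    "r1 \<noteq> 0 \<longrightarrow> r2 - r3 + r4 - r0 = -1"
    "r2 \<noteq> 0 \<longrightarrow> r3 - r4 + r0 - r1 = -1"
    "r3 \<noteq> 0 \<longrightarrow> r4 - r0 + r1 - r2 = -1"
    "r4 \<noteq> 0 \<longrightarrow> r0 - r1 + r2 - r3 = -1"
    "r0 + r1 + r2 + r3 + r4 = 0"
  shows "r0 \<in> \<int>"
proof -
  have s1: "Re r0 + Re r1 + Re r2 + Re r3 + Re r4 = 0" using arg_cong[OF assms(6), of Re] by simp
  have s2: "Im r0 + Im r1 + Im r2 + Im r3 + Im r4 = 0" using arg_cong[OF assms(6), of Im] by simp
  have h: "Im r0 = 0 \<and> (Re r0 = 0 \<or> Re r0 = 1 \<or> Re r0 = -1 \<or> Re r0 = 3 \<or> Re r0 = -3)"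
    apply (rule alg1r[where xa="Re r3" and xb="Re r4" and xc="Re r0" and xd="Re r1" and xe="Re r2" and ya="Im r3" and yb="Im r4" and yc="Im r0" and yd="Im r1" and ye="Im r2"])
    using assms(1-5) s1 s2 by (simp_all add: complex_eq_iff)
  then have "r0 = 0 \<or> r0 = 1 \<or> r0 = -1 \<or> r0 = 3 \<or> r0 = -3"
    by (auto simp: complex_eq_iff)
  moreover have "(-1::complex) \<in> \<int>" "(-3::complex) \<in> \<int>" "(3::complex) \<in> \<int>"
    by (metis Ints_minus Ints_numeral Ints_1)+
  ultimately show ?thesis by auto
qed

lemma alg0c:
  fixes r0 r1 r2 r3 r4 :: complex
  assumes "r0 \<noteq> 0 \<longrightarrow> r1 - r2 + r3 - r4 = 0"
    "r1 \<noteq> 0 \<longrightarrow> r2 - r3 + r4 - r0 = 0"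
    "r2 \<noteq> 0 \<longrightarrow> r3 - r4 + r0 - r1 = 0"
    "r3 \<noteq> 0 \<longrightarrow> r4 - r0 + r1 - r2 = 0"
    "r4 \<noteq> 0 \<longrightarrow> r0 - r1 + r2 - r3 = 0"
    "r0 + r1 + r2 + r3 + r4 = 0"
  shows "r0 = 0 \<and> r1 = 0 \<and> r2 = 0 \<and> r3 = 0 \<and> r4 = 0"
proof -
  have h: "Re r0 = 0 \<and> Im r0 = 0 \<and> Re r1 = 0 \<and> Im r1 = 0 \<and> Re r2 = 0 \<and> Im r2 = 0 \<and>
    Re r3 = 0 \<and> Im r3 = 0 \<and> Re r4 = 0 \<and> Im r4 = 0"
    apply (rule alg0r)
    using assms(1-5) arg_cong[OF assms(6), of Re] arg_cong[OF assms(6), of Im]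
    by (simp_all add: complex_eq_iff)
  then show ?thesis by (simp add: complex_eq_iff)
qed

definition good :: "complex fls \<Rightarrow> bool" where
  "good F \<longleftrightarrow> (\<forall>k < -1. F $$ k = 0) \<and> F $$ (-1) \<in> \<int>"

lemma local_A4:
  fixes A B C G H :: "complex fls"
  assumes eA: "fls_deriv A = A * (B - C + G - H) + fls_const a"
    and eB: "fls_deriv B = B * (C - G + H - A) + fls_const b"
    and eC: "fls_deriv C = C * (G - H + A - B) + fls_const c"
    and eG: "fls_deriv G = G * (H - A + B - C) + fls_const g"
    and eH: "fls_deriv H = H * (A - B + C - G) + fls_const h"
    and s: "\<forall>k<0. (A + B + C + G + H) $$ k = 0"
  shows "good A \<and> good B \<and> good C \<and> good G \<and> good H"
proof -
  define d where "d = min 0 (min (fls_subdegree A) (min (fls_subdegree B)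
     (min (fls_subdegree C) (min (fls_subdegree G) (fls_subdegree H)))))"
  have lA: "\<forall>k<d. A $$ k = 0" and lB: "\<forall>k<d. B $$ k = 0" and lC: "\<forall>k<d. C $$ k = 0"
    and lG: "\<forall>k<d. G $$ k = 0" and lH: "\<forall>k<d. H $$ k = 0"
    unfolding d_def by auto
  show ?thesis
  proof (cases "d = 0")
    case True
    then show ?thesis using lA lB lC lG lH by (simp add: good_def)
  next
    case False
    then have d: "d < 0" unfolding d_def by linarith
    have ex: "A $$ d \<noteq> 0 \<or> B $$ d \<noteq> 0 \<or> C $$ d \<noteq> 0 \<or> G $$ d \<noteq> 0 \<or> H $$ d \<noteq> 0"
    proof -
      have "d = fls_subdegree A \<or> d = fls_subdegree B \<or> d = fls_subdegree C \<or>
            d = fls_subdegree G \<or> d = fls_subdegree H"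
        using d unfolding d_def by linarith
      moreover have "F $$ fls_subdegree F \<noteq> 0" if "fls_subdegree F < 0" for F :: "complex fls"
        using that by (cases "F = 0") auto
      ultimately show ?thesis using d by auto
    qed
    have step: "F $$ d \<noteq> 0 \<longrightarrow> X $$ d = (if d = -1 then -1 else 0)"
      if "\<forall>k<d. F $$ k = 0" "\<forall>k<d. X $$ k = 0" "fls_deriv F = F * X + fls_const \<alpha>"
      for F X :: "complex fls" and \<alpha>
    proof
      assume "F $$ d \<noteq> 0"
      from lead_step[OF that(1) this d that(2) that(3)]
      have "\<forall>k < -1. X $$ k = 0" "X $$ (-1) = of_int d" by auto
      then show "X $$ d = (if d = -1 then -1 else 0)"
      proof (cases "d = -1")
        case False then have "d < -1" using d by linarith
        then show ?thesis using \<open>\<forall>k < -1. X $$ k = 0\<close> False by simp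
      qed simp
    qed
    have sA: "A $$ d \<noteq> 0 \<longrightarrow> B $$ d - C $$ d + G $$ d - H $$ d = (if d = -1 then -1 else 0)"
      using step[OF lA _ eA] lB lC lG lH by simp
    have sB: "B $$ d \<noteq> 0 \<longrightarrow> C $$ d - G $$ d + H $$ d - A $$ d = (if d = -1 then -1 else 0)"
      using step[OF lB _ eB] lA lC lG lH by simp
    have sC: "C $$ d \<noteq> 0 \<longrightarrow> G $$ d - H $$ d + A $$ d - B $$ d = (if d = -1 then -1 else 0)"
      using step[OF lC _ eC] lA lB lG lH by simp
    have sG: "G $$ d \<noteq> 0 \<longrightarrow> H $$ d - A $$ d + B $$ d - C $$ d = (if d = -1 then -1 else 0)"
      using step[OF lG _ eG] lA lB lC lH by simp
    have sH: "H $$ d \<noteq> 0 \<longrightarrow> A $$ d - B $$ d + C $$ d - G $$ d = (if d = -1 then -1 else 0)"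
      using step[OF lH _ eH] lA lB lC lG by simp
    have sum: "A $$ d + B $$ d + C $$ d + G $$ d + H $$ d = 0" using s d by simp
    show ?thesis
    proof (cases "d = -1")
      case False
      then have "A $$ d = 0 \<and> B $$ d = 0 \<and> C $$ d = 0 \<and> G $$ d = 0 \<and> H $$ d = 0"
        using sA sB sC sG sH sum by (intro alg0c) simp_all
      then show ?thesis using ex by blast
    next
      case True
      have iA: "A $$ d \<in> \<int>" using sA sB sC sG sH sum True by (intro alg1c) simp_all
      have iB: "B $$ d \<in> \<int>" using sA sB sC sG sH sum True
        by (intro alg1c[of "B $$ d" "C $$ d" "G $$ d" "H $$ d" "A $$ d"]) (simp_all add: algebra_simps)
      have iC: "C $$ d \<in> \<int>" using sA sB sC sG sH sum True
        by (intro alg1c[of "C $$ d" "G $$ d" "H $$ d" "A $$ d" "B $$ d"]) (simp_all add: algebra_simps)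
      have iG: "G $$ d \<in> \<int>" using sA sB sC sG sH sum True
        by (intro alg1c[of "G $$ d" "H $$ d" "A $$ d" "B $$ d" "C $$ d"]) (simp_all add: algebra_simps)
      have iH: "H $$ d \<in> \<int>" using sA sB sC sG sH sum True
        by (intro alg1c[of "H $$ d" "A $$ d" "B $$ d" "C $$ d" "G $$ d"]) (simp_all add: algebra_simps)
      show ?thesis using iA iB iC iG iH lA lB lC lG lH True by (simp add: good_def)
    qed
  qed
qed

lemma pole_step:
  fixes p X :: "complex fls"
  assumes pole: "\<exists>k<0. p $$ k \<noteq> 0" and eq: "Dinf p = p * X + fls_const \<alpha>"
  shows "\<forall>k\<le>0. X $$ k = 0"
proof (rule ccontr)
  assume "\<not> (\<forall>k\<le>0. X $$ k = 0)"
  then obtain k where k: "k \<le> 0" "X $$ k \<noteq> 0" by auto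
  have X0: "X \<noteq> 0" using k by auto
  obtain j where j: "j < 0" "p $$ j \<noteq> 0" using pole by auto
  have p0: "p \<noteq> 0" using j by auto
  define d where "d = fls_subdegree p"
  define e where "e = fls_subdegree X"
  have d: "d < 0" using fls_subdegree_leI[OF j(2)] j(1) unfolding d_def by linarith
  have e: "e \<le> 0" using fls_subdegree_leI[OF k(2)] k(1) unfolding e_def by linarith
  have coef: "(Dinf p) $$ n = (p * X) $$ n + (fls_const \<alpha>) $$ n" for n
    by (simp only: eq fls_plus_nth)
  have "(Dinf p) $$ (d + e) = - of_int (d + e - 1) * p $$ (d + e - 1)" by (simp only: Dinf_nth)
  moreover have "p $$ (d + e - 1) = 0" using e unfolding d_def by simp
  moreover have "(p * X) $$ (d + e) = p $$ d * X $$ e"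
    using fls_times_base[of p X] unfolding d_def e_def by simp
  moreover have "(fls_const \<alpha>) $$ (d + e) = 0" using d e by simp
  ultimately have "p $$ d * X $$ e = 0" using coef[of "d+e"] by simp
  moreover have "p $$ d \<noteq> 0" "X $$ e \<noteq> 0" using p0 X0 unfolding d_def e_def by simp_all
  ultimately show False by simp
qed

lemma reg_step:
  fixes g Y :: "complex fls"
  assumes reg: "\<forall>k<0. g $$ k = 0" and eq: "Dinf g = g * Y + fls_const \<alpha>"
    and Y: "\<forall>k < -1. Y $$ k = 0" "Y $$ (-1) = y" "y \<noteq> 0"
  shows "g $$ 0 = 0 \<and> y * g $$ 1 + \<alpha> = 0 \<and> (\<alpha> = 0 \<longrightarrow> g = 0)"
proof (cases "g = 0")
  case True
  then have "fls_const \<alpha> = (0 :: complex fls)" using eq by (simp add: Dinf_def)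
  then have "\<alpha> = 0" by (metis fls_const_0 fls_const_nonzero)
  then show ?thesis using True by simp
next
  case False
  define e where "e = fls_subdegree g"
  have e0: "0 \<le> e" unfolding e_def using reg False by (intro fls_subdegree_geI) auto
  have ge: "g $$ e \<noteq> 0" using False unfolding e_def by simp
  have low: "\<forall>k<e. g $$ k = 0" unfolding e_def by simp
  have coef: "(Dinf g) $$ n = (g * Y) $$ n + (fls_const \<alpha>) $$ n" for n
    by (simp only: eq fls_plus_nth)
  have "(Dinf g) $$ (e - 1) = - of_int (e - 1 - 1) * g $$ (e - 1 - 1)" by (simp only: Dinf_nth)
  moreover have "g $$ (e - 1 - 1) = 0" using low by simp
  moreover have "(g * Y) $$ (e + -1) = g $$ e * y"
    using prod_low(1)[OF low Y(1)] Y(2) by simp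
  ultimately have E: "0 = g $$ e * y + (if e - 1 = 0 then \<alpha> else 0)"
    using coef[of "e - 1"] by simp
  have "e = 1"
  proof (rule ccontr)
    assume "e \<noteq> 1"
    then have "g $$ e * y = 0" using E by simp
    then show False using ge Y(3) by simp
  qed
  then have "0 = g $$ 1 * y + \<alpha>" using E by simp
  moreover have "g $$ 0 = 0" using low \<open>e = 1\<close> by simp
  moreover have "\<alpha> \<noteq> 0" using \<open>0 = g $$ 1 * y + \<alpha>\<close> ge \<open>e = 1\<close> Y(3) by auto
  ultimately show ?thesis by (simp add: algebra_simps)
qed

lemma aux_g: "(- (1/3)) * (x::complex) + p = 0 \<Longrightarrow> x = 3 * p"
  by algebra
lemma aux_h: "(1/3) * (x::complex) + p = 0 \<Longrightarrow> x = - 3 * p"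
  by algebra

locale infsys =
  fixes a b c g h :: "complex fls" and pa pb pc pg ph :: complex
  assumes eA: "Dinf a = a * (b - c + g - h) + fls_const pa"
    and eB: "Dinf b = b * (c - g + h - a) + fls_const pb"
    and eC: "Dinf c = c * (g - h + a - b) + fls_const pc"
    and eG: "Dinf g = g * (h - a + b - c) + fls_const pg"
    and eH: "Dinf h = h * (a - b + c - g) + fls_const ph"
    and sm: "a + b + c + g + h = fls_X_inv"
    and pA: "\<exists>k<0. a $$ k \<noteq> 0" and pB: "\<exists>k<0. b $$ k \<noteq> 0" and pC: "\<exists>k<0. c $$ k \<noteq> 0"
    and rG: "\<forall>k<0. g $$ k = 0" and rH: "\<forall>k<0. h $$ k = 0"
    and ps: "pa + pb + pc + pg + ph = 1"
begin

lemma XA: "\<forall>k\<le>0. (b - c + g - h) $$ k = 0" by (rule pole_step[OF pA eA])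
lemma XB: "\<forall>k\<le>0. (c - g + h - a) $$ k = 0" by (rule pole_step[OF pB eB])
lemma XC: "\<forall>k\<le>0. (g - h + a - b) $$ k = 0" by (rule pole_step[OF pC eC])

lemma smk: "a $$ k + b $$ k + c $$ k + g $$ k + h $$ k = (if k = -1 then 1 else 0)"
  using arg_cong[OF sm, of "\<lambda>f. f $$ k"] by simp

lemma neg:
  assumes "k < 0"
  shows "a $$ k = (if k = -1 then 1/3 else 0) \<and> b $$ k = (if k = -1 then 1/3 else 0)
    \<and> c $$ k = (if k = -1 then 1/3 else 0)"
proof -
  have g0: "g $$ k = 0" and h0: "h $$ k = 0" using rG rH assms by auto
  have 1: "b $$ k = c $$ k" using XA[rule_format, of k] assms g0 h0 by simp
  have 2: "c $$ k = a $$ k" using XB[rule_format, of k] assms g0 h0 by simp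
  have 3: "a $$ k + b $$ k + c $$ k = (if k = -1 then 1 else 0)" using smk[of k] g0 h0 by simp
  then have "3 * a $$ k = (if k = -1 then 1 else 0)" using 1 2 by simp
  moreover have "a $$ k = (3 * a $$ k) / 3" by simp
  ultimately have "a $$ k = (if k = -1 then 1 else 0) / 3" by metis
  then have "a $$ k = (if k = -1 then 1/3 else 0)" by (cases "k = -1") simp_all
  then show ?thesis using 1 2 by simp
qed

lemma lowA: "\<forall>k < -1. a $$ k = 0" and lowB: "\<forall>k < -1. b $$ k = 0"
  and lowC: "\<forall>k < -1. c $$ k = 0"
  using neg by auto

lemma resA: "a $$ (-1) = 1/3" and resB: "b $$ (-1) = 1/3" and resC: "c $$ (-1) = 1/3"
  using neg[of "-1"] by auto

lemma G01: "g $$ 0 = 0 \<and> g $$ 1 = 3 * pg \<and> (pg = 0 \<longrightarrow> g = 0)"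
proof -
  have Y: "\<forall>k < -1. (h - a + b - c) $$ k = 0"
  proof (intro allI impI)
    fix k :: int assume "k < -1"
    then show "(h - a + b - c) $$ k = 0" using rH lowA lowB lowC by simp
  qed
  have Y1: "(h - a + b - c) $$ (-1) = - (1/3)"
    by (simp only: fls_minus_nth fls_plus_nth resA resB resC rH[rule_format, of "-1", simplified]) simp
  have nz: "- (1/3) \<noteq> (0::complex)" by simp
  have r: "g $$ 0 = 0 \<and> (- (1/3)) * g $$ 1 + pg = 0 \<and> (pg = 0 \<longrightarrow> g = 0)"
    by (rule reg_step[OF rG eG Y Y1 nz])
  then have "(- (1/3)) * g $$ 1 + pg = 0" by blast
  then have "g $$ 1 = 3 * pg" by (rule aux_g)
  then show ?thesis using r by blast
qed

lemma H01: "h $$ 0 = 0 \<and> h $$ 1 = - 3 * ph \<and> (ph = 0 \<longrightarrow> h = 0)"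
proof -
  have Y: "\<forall>k < -1. (a - b + c - g) $$ k = 0"
  proof (intro allI impI)
    fix k :: int assume "k < -1"
    then show "(a - b + c - g) $$ k = 0" using rG lowA lowB lowC by simp
  qed
  have Y1: "(a - b + c - g) $$ (-1) = 1/3"
    by (simp only: fls_minus_nth fls_plus_nth resA resB resC rG[rule_format, of "-1", simplified]) simp
  have nz: "1/3 \<noteq> (0::complex)" by simp
  have r: "h $$ 0 = 0 \<and> (1/3) * h $$ 1 + ph = 0 \<and> (ph = 0 \<longrightarrow> h = 0)"
    by (rule reg_step[OF rH eH Y Y1 nz])
  then have "(1/3) * h $$ 1 + ph = 0" by blast
  then have "h $$ 1 = - 3 * ph" by (rule aux_h)
  then show ?thesis using r by blast
qed

lemma zero0: "a $$ 0 = 0 \<and> b $$ 0 = 0 \<and> c $$ 0 = 0"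
proof -
  have g0: "g $$ 0 = 0" and h0: "h $$ 0 = 0" using G01 H01 by auto
  have 1: "b $$ 0 = c $$ 0" using XA[rule_format, of 0] g0 h0 by simp
  have 2: "c $$ 0 = a $$ 0" using XB[rule_format, of 0] g0 h0 by simp
  have 3: "a $$ 0 + b $$ 0 + c $$ 0 = 0" using smk[of 0] g0 h0 by simp
  then have "3 * a $$ 0 = 0" using 1 2 by simp
  then show ?thesis using 1 2 by simp
qed

lemma coef0:
  fixes p Y :: "complex fls" and \<alpha> :: complex
  assumes "\<forall>k < -1. p $$ k = 0" "p $$ (-1) = 1/3" "\<forall>k\<le>0. Y $$ k = 0"
    and "Dinf p = p * Y + fls_const \<alpha>"
  shows "1/3 = Y $$ 1 / 3 + \<alpha>"
proof -
  have coef: "(Dinf p) $$ 0 = (p * Y) $$ 0 + (fls_const \<alpha>) $$ 0"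
    by (simp only: assms(4) fls_plus_nth)
  have "(Dinf p) $$ 0 = 1/3" using assms(2) by (simp add: Dinf_nth)
  moreover have "(p * Y) $$ (-1 + 1) = p $$ (-1) * Y $$ 1"
    using assms(3) by (intro prod_low(1)[OF assms(1)]) auto
  ultimately show ?thesis using coef assms(2) by simp
qed

lemma A1: "a $$ 1 = pb - pc - 3 * pg - ph"
proof -
  have 1: "1/3 = (b $$ 1 - c $$ 1 + g $$ 1 - h $$ 1) / 3 + pa"
    using coef0[OF lowA resA XA eA] by (simp only: fls_minus_nth fls_plus_nth)
  have 2: "1/3 = (c $$ 1 - g $$ 1 + h $$ 1 - a $$ 1) / 3 + pb"
    using coef0[OF lowB resB XB eB] by (simp only: fls_minus_nth fls_plus_nth)
  have 3: "1/3 = (g $$ 1 - h $$ 1 + a $$ 1 - b $$ 1) / 3 + pc"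
    using coef0[OF lowC resC XC eC] by (simp only: fls_minus_nth fls_plus_nth)
  have 4: "a $$ 1 + b $$ 1 + c $$ 1 + g $$ 1 + h $$ 1 = 0" using smk[of 1] by simp
  have 5: "g $$ 1 = 3 * pg" "h $$ 1 = - 3 * ph" using G01 H01 by auto
  from 1 2 3 4 5 ps show ?thesis
    by algebra
qed

end

lemma ind_step:
  fixes p Y :: "complex fls" and n :: int
  assumes lowp: "\<forall>k < -1. p $$ k = 0" and res: "p $$ (-1) = 1/3" and n: "0 \<le> n"
    and lowY: "\<forall>k<n. Y $$ k = 0" and ih: "\<forall>k. 0 \<le> k \<and> k < n \<longrightarrow> p $$ k = 0"
    and eq: "Dinf p = p * Y + fls_const (1/3)"
  shows "Y $$ n = 0"
proof -
  have coef: "(Dinf p) $$ (n - 1) = (p * Y) $$ (n - 1) + (fls_const (1/3)) $$ (n - 1)"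
    by (simp only: eq fls_plus_nth)
  have L: "(Dinf p) $$ (n - 1) = (if n = 1 then 1/3 else 0)"
  proof -
    have "(Dinf p) $$ (n - 1) = - of_int (n - 1 - 1) * p $$ (n - 1 - 1)" by (simp only: Dinf_nth)
    moreover have "n = 0 \<or> n = 1 \<or> n \<ge> 2" using n by linarith
    moreover have "p $$ (n - 1 - 1) = 0" if "n \<ge> 2" using ih that by simp
    moreover have "p $$ (n - 1 - 1) = 0" if "n = 0" using lowp that by simp
    ultimately show ?thesis using res by auto
  qed
  have P: "(p * Y) $$ (-1 + n) = p $$ (-1) * Y $$ n" by (rule prod_low(1)[OF lowp lowY])
  have "(1/3) * Y $$ n = 0" using coef L P res by (cases "n = 1") (simp_all add: algebra_simps)
  then show ?thesis by simp
qed

lemma nonneg_ind: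
  assumes step: "\<And>m. 0 \<le> m \<Longrightarrow> (\<forall>k. 0 \<le> k \<and> k < m \<longrightarrow> P k) \<Longrightarrow> P m"
  shows "\<forall>k. 0 \<le> k \<longrightarrow> P (k::int)"
proof -
  have "P (int j)" for j :: nat
  proof (induction j rule: less_induct)
    case (less j)
    show ?case
    proof (rule step)
      show "\<forall>k. 0 \<le> k \<and> k < int j \<longrightarrow> P k"
      proof (intro allI impI)
        fix k :: int assume k: "0 \<le> k \<and> k < int j"
        then have "nat k < j" by linarith
        then have "P (int (nat k))" using less by blast
        then show "P k" using k by simp
      qed
    qed simp
  qed
  then show ?thesis by (metis nonneg_int_cases)
qed

definition T3 :: "complex fls" where "T3 = fls_const (1/3) * fls_X_inv"

lemma T3_nth: "T3 $$ k = (if k = -1 then 1/3 else 0)"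
  by (simp add: T3_def)

context infsys
begin

lemma eqT3:
  fixes p :: "complex fls"
  assumes "\<forall>k<0. p $$ k = (if k = -1 then 1/3 else 0)" "\<forall>k. 0 \<le> k \<longrightarrow> p $$ k = 0"
  shows "p = T3"
proof -
  have "p $$ k = T3 $$ k" for k
    using assms by (cases "k < 0") (auto simp: T3_nth)
  then show ?thesis by (simp add: fls_eq_iff)
qed

lemma case0:
  assumes "pa = 1/3" "pb = 1/3" "pc = 1/3" "pg = 0" "ph = 0"
  shows "a = T3 \<and> b = T3 \<and> c = T3 \<and> g = 0 \<and> h = 0"
proof -
  have g: "g = 0" and h: "h = 0" using G01 H01 assms by auto
  have main: "\<forall>k. 0 \<le> k \<longrightarrow> (a $$ k = 0 \<and> b $$ k = 0 \<and> c $$ k = 0)"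
  proof (rule nonneg_ind)
    fix m :: int assume m: "0 \<le> m" and ih: "\<forall>k. 0 \<le> k \<and> k < m \<longrightarrow> (a $$ k = 0 \<and> b $$ k = 0 \<and> c $$ k = 0)"
    have ihA: "\<forall>k. 0 \<le> k \<and> k < m \<longrightarrow> a $$ k = 0" and ihB: "\<forall>k. 0 \<le> k \<and> k < m \<longrightarrow> b $$ k = 0"
      and ihC: "\<forall>k. 0 \<le> k \<and> k < m \<longrightarrow> c $$ k = 0" using ih by auto
    have YA: "\<forall>k<m. (b - c + g - h) $$ k = 0"
    proof (intro allI impI)
      fix k assume "k < m"
      then show "(b - c + g - h) $$ k = 0" using XA ih g h by (cases "k \<le> 0") auto
    qed
    have YB: "\<forall>k<m. (c - g + h - a) $$ k = 0"
    proof (intro allI impI)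
      fix k assume "k < m"
      then show "(c - g + h - a) $$ k = 0" using XB ih g h by (cases "k \<le> 0") auto
    qed
    have YC: "\<forall>k<m. (g - h + a - b) $$ k = 0"
    proof (intro allI impI)
      fix k assume "k < m"
      then show "(g - h + a - b) $$ k = 0" using XC ih g h by (cases "k \<le> 0") auto
    qed
    have 1: "(b - c + g - h) $$ m = 0"
      by (rule ind_step[OF lowA resA m YA ihA]) (use eA assms(1) in simp)
    have 2: "(c - g + h - a) $$ m = 0"
      by (rule ind_step[OF lowB resB m YB ihB]) (use eB assms(2) in simp)
    have 3: "(g - h + a - b) $$ m = 0"
      by (rule ind_step[OF lowC resC m YC ihC]) (use eC assms(3) in simp)
    have 4: "a $$ m + b $$ m + c $$ m + g $$ m + h $$ m = 0" using smk[of m] m by simp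
    have e1: "b $$ m - c $$ m = 0" using 1 g h by simp
    have e2: "c $$ m - a $$ m = 0" using 2 g h by simp
    have e4: "a $$ m + b $$ m + c $$ m = 0" using 4 g h by simp
    show "a $$ m = 0 \<and> b $$ m = 0 \<and> c $$ m = 0" using e1 e2 e4 by algebra
  qed
  have "a = T3" using neg main by (intro eqT3) auto
  moreover have "b = T3" using neg main by (intro eqT3) auto
  moreover have "c = T3" using neg main by (intro eqT3) auto
  ultimately show ?thesis using g h by simp
qed

lemma case1:
  assumes "pa = 1/3" "pb = 1/3" "pg = 0"
  shows "a = T3 \<and> b = T3 \<and> g = 0"
proof -
  have g: "g = 0" using G01 assms by auto
  have ch: "c $$ k + h $$ k = - a $$ k - b $$ k" if "0 \<le> k" for k
  proof -
    have s: "a $$ k + b $$ k + c $$ k + g $$ k + h $$ k = 0" using smk[of k] that by simp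
    have "g $$ k = 0" using g by simp
    then have "(c $$ k + h $$ k) + (a $$ k + b $$ k) = 0" using s by (simp add: algebra_simps)
    then show ?thesis by (simp add: add_eq_0_iff2)
  qed
  have main: "\<forall>k. 0 \<le> k \<longrightarrow> (a $$ k = 0 \<and> b $$ k = 0)"
  proof (rule nonneg_ind)
    fix m :: int assume m: "0 \<le> m" and ih: "\<forall>k. 0 \<le> k \<and> k < m \<longrightarrow> (a $$ k = 0 \<and> b $$ k = 0)"
    have ihA: "\<forall>k. 0 \<le> k \<and> k < m \<longrightarrow> a $$ k = 0" and ihB: "\<forall>k. 0 \<le> k \<and> k < m \<longrightarrow> b $$ k = 0"
      using ih by auto
    have YA: "\<forall>k<m. (b - c + g - h) $$ k = 0"
    proof (intro allI impI)
      fix k assume k: "k < m"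
      show "(b - c + g - h) $$ k = 0"
      proof (cases "k \<le> 0")
        case True then show ?thesis using XA by auto
      next
        case False
        then have "a $$ k = 0" "b $$ k = 0" using ih k by auto
        then show ?thesis using ch[of k] False g by (simp add: algebra_simps)
      qed
    qed
    have YB: "\<forall>k<m. (c - g + h - a) $$ k = 0"
    proof (intro allI impI)
      fix k assume k: "k < m"
      show "(c - g + h - a) $$ k = 0"
      proof (cases "k \<le> 0")
        case True then show ?thesis using XB by auto
      next
        case False
        then have "a $$ k = 0" "b $$ k = 0" using ih k by auto
        then show ?thesis using ch[of k] False g by (simp add: algebra_simps)
      qed
    qed
    have 1: "(b - c + g - h) $$ m = 0"
      by (rule ind_step[OF lowA resA m YA ihA]) (use eA assms(1) in simp)
    have 2: "(c - g + h - a) $$ m = 0"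
      by (rule ind_step[OF lowB resB m YB ihB]) (use eB assms(2) in simp)
    have e1: "b $$ m - (c $$ m + h $$ m) = 0" using 1 g by (simp add: algebra_simps)
    have e2: "(c $$ m + h $$ m) - a $$ m = 0" using 2 g by (simp add: algebra_simps)
    have X: "c $$ m + h $$ m = a $$ m" using e2 by simp
    have C: "b $$ m = a $$ m" using e1 X by simp
    have "a $$ m = - a $$ m - a $$ m" using ch[OF m] X C by simp
    then have "3 * a $$ m = 0" by (simp add: algebra_simps)
    then show "a $$ m = 0 \<and> b $$ m = 0" using C by simp
  qed
  have "a = T3" using neg main by (intro eqT3) auto
  moreover have "b = T3" using neg main by (intro eqT3) auto
  ultimately show ?thesis using g by simp
qed

lemma case4:
  assumes "pb = 1/3" "pc = 1/3" "ph = 0"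
  shows "b = T3 \<and> c = T3 \<and> h = 0"
proof -
  have h: "h = 0" using H01 assms by auto
  have ag: "a $$ k + g $$ k = - b $$ k - c $$ k" if "0 \<le> k" for k
  proof -
    have s: "a $$ k + b $$ k + c $$ k + g $$ k + h $$ k = 0" using smk[of k] that by simp
    have "h $$ k = 0" using h by simp
    then have "(a $$ k + g $$ k) + (b $$ k + c $$ k) = 0" using s by (simp add: algebra_simps)
    then show ?thesis by (simp add: add_eq_0_iff2)
  qed
  have main: "\<forall>k. 0 \<le> k \<longrightarrow> (b $$ k = 0 \<and> c $$ k = 0)"
  proof (rule nonneg_ind)
    fix m :: int assume m: "0 \<le> m" and ih: "\<forall>k. 0 \<le> k \<and> k < m \<longrightarrow> (b $$ k = 0 \<and> c $$ k = 0)"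
    have ihB: "\<forall>k. 0 \<le> k \<and> k < m \<longrightarrow> b $$ k = 0" and ihC: "\<forall>k. 0 \<le> k \<and> k < m \<longrightarrow> c $$ k = 0"
      using ih by auto
    have YB: "\<forall>k<m. (c - g + h - a) $$ k = 0"
    proof (intro allI impI)
      fix k assume k: "k < m"
      show "(c - g + h - a) $$ k = 0"
      proof (cases "k \<le> 0")
        case True then show ?thesis using XB by auto
      next
        case False
        then have "b $$ k = 0" "c $$ k = 0" using ih k by auto
        then show ?thesis using ag[of k] False h by (simp add: algebra_simps)
      qed
    qed
    have YC: "\<forall>k<m. (g - h + a - b) $$ k = 0"
    proof (intro allI impI)
      fix k assume k: "k < m"
      show "(g - h + a - b) $$ k = 0"
      proof (cases "k \<le> 0")
        case True then show ?thesis using XC by auto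
      next
        case False
        then have "b $$ k = 0" "c $$ k = 0" using ih k by auto
        then show ?thesis using ag[of k] False h by (simp add: algebra_simps)
      qed
    qed
    have 1: "(c - g + h - a) $$ m = 0"
      by (rule ind_step[OF lowB resB m YB ihB]) (use eB assms(1) in simp)
    have 2: "(g - h + a - b) $$ m = 0"
      by (rule ind_step[OF lowC resC m YC ihC]) (use eC assms(2) in simp)
    have e1: "c $$ m - (a $$ m + g $$ m) = 0" using 1 h by (simp add: algebra_simps)
    have e2: "(a $$ m + g $$ m) - b $$ m = 0" using 2 h by (simp add: algebra_simps)
    have X: "a $$ m + g $$ m = b $$ m" using e2 by simp
    have C: "c $$ m = b $$ m" using e1 X by simp
    have "b $$ m = - b $$ m - b $$ m" using ag[OF m] X C by simp
    then have "3 * b $$ m = 0" by (simp add: algebra_simps)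
    then show "b $$ m = 0 \<and> c $$ m = 0" using C by simp
  qed
  have "b = T3" using neg main by (intro eqT3) auto
  moreover have "c = T3" using neg main by (intro eqT3) auto
  ultimately show ?thesis using h by simp
qed

end

lemma mods5: "(0+1) mod 5 = (1::nat)" "(0+2) mod 5 = (2::nat)" "(0+3) mod 5 = (3::nat)" "(0+4) mod 5 = (4::nat)" "(1+1) mod 5 = (2::nat)" "(1+2) mod 5 = (3::nat)" "(1+3) mod 5 = (4::nat)" "(1+4) mod 5 = (0::nat)" "(2+1) mod 5 = (3::nat)" "(2+2) mod 5 = (4::nat)" "(2+3) mod 5 = (0::nat)" "(2+4) mod 5 = (1::nat)" "(3+1) mod 5 = (4::nat)" "(3+2) mod 5 = (0::nat)" "(3+3) mod 5 = (1::nat)" "(3+4) mod 5 = (2::nat)" "(4+1) mod 5 = (0::nat)" "(4+2) mod 5 = (1::nat)" "(4+3) mod 5 = (2::nat)" "(4+4) mod 5 = (3::nat)"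
  by simp_all

lemma A4_expand:
  assumes "A4_rational_solution \<alpha> f"
  shows "rderiv (f 0) = f 0 * (f 1 - f 2 + f 3 - f 4) + rconst (\<alpha> 0)"
    "rderiv (f 1) = f 1 * (f 2 - f 3 + f 4 - f 0) + rconst (\<alpha> 1)"
    "rderiv (f 2) = f 2 * (f 3 - f 4 + f 0 - f 1) + rconst (\<alpha> 2)"
    "rderiv (f 3) = f 3 * (f 4 - f 0 + f 1 - f 2) + rconst (\<alpha> 3)"
    "rderiv (f 4) = f 4 * (f 0 - f 1 + f 2 - f 3) + rconst (\<alpha> 4)"
    "f 0 + f 1 + f 2 + f 3 + f 4 = tvar"
proof -
  have all: "\<forall>j<5. rderiv (f j) =
        f j * (f ((j+1) mod 5) - f ((j+2) mod 5) + f ((j+3) mod 5) - f ((j+4) mod 5))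
        + rconst (\<alpha> j)" and s: "(\<Sum>j<5. f j) = tvar"
    using assms by (auto simp: A4_rational_solution_def)
  show "rderiv (f 0) = f 0 * (f 1 - f 2 + f 3 - f 4) + rconst (\<alpha> 0)" using all[rule_format, of 0] by (simp only: mods5) (simp?)
  show "rderiv (f 1) = f 1 * (f 2 - f 3 + f 4 - f 0) + rconst (\<alpha> 1)" using all[rule_format, of 1] by (simp only: mods5) (simp?)
  show "rderiv (f 2) = f 2 * (f 3 - f 4 + f 0 - f 1) + rconst (\<alpha> 2)" using all[rule_format, of 2] by (simp only: mods5) (simp?)
  show "rderiv (f 3) = f 3 * (f 4 - f 0 + f 1 - f 2) + rconst (\<alpha> 3)" using all[rule_format, of 3] by (simp only: mods5) (simp?)
  show "rderiv (f 4) = f 4 * (f 0 - f 1 + f 2 - f 3) + rconst (\<alpha> 4)" using all[rule_format, of 4] by (simp only: mods5) (simp?)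
  have "(\<Sum>j<5. f j) = f 0 + f 1 + f 2 + f 3 + f 4"
  proof -
    have "{..<5::nat} = {0,1,2,3,4}" by auto
    then show ?thesis by (simp add: add.assoc)
  qed
  then show "f 0 + f 1 + f 2 + f 3 + f 4 = tvar" using s by simp
qed

lemma transfer:
  assumes nz: "nzx x" and D: "\<And>g. E x (rderiv g) = D (E x g)" and sol: "A4_rational_solution \<alpha> f"
  shows "D (E x (f 0)) = E x (f 0) * (E x (f 1) - E x (f 2) + E x (f 3) - E x (f 4)) + fls_const (\<alpha> 0)"
    "D (E x (f 1)) = E x (f 1) * (E x (f 2) - E x (f 3) + E x (f 4) - E x (f 0)) + fls_const (\<alpha> 1)"
    "D (E x (f 2)) = E x (f 2) * (E x (f 3) - E x (f 4) + E x (f 0) - E x (f 1)) + fls_const (\<alpha> 2)"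
    "D (E x (f 3)) = E x (f 3) * (E x (f 4) - E x (f 0) + E x (f 1) - E x (f 2)) + fls_const (\<alpha> 3)"
    "D (E x (f 4)) = E x (f 4) * (E x (f 0) - E x (f 1) + E x (f 2) - E x (f 3)) + fls_const (\<alpha> 4)"
    "E x (f 0) + E x (f 1) + E x (f 2) + E x (f 3) + E x (f 4) = x"
proof -
  note ex = A4_expand[OF sol]
  have s: "E x (f 0 + f 1 + f 2 + f 3 + f 4) = E x tvar" using ex(6) by simp
  show "D (E x (f 0)) = E x (f 0) * (E x (f 1) - E x (f 2) + E x (f 3) - E x (f 4)) + fls_const (\<alpha> 0)"
    using arg_cong[OF ex(1), of "E x"]
    by (simp add: D[symmetric] E_add[OF nz] E_diff[OF nz] E_mult[OF nz] E_rconst[OF nz])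
  show "D (E x (f 1)) = E x (f 1) * (E x (f 2) - E x (f 3) + E x (f 4) - E x (f 0)) + fls_const (\<alpha> 1)"
    using arg_cong[OF ex(2), of "E x"]
    by (simp add: D[symmetric] E_add[OF nz] E_diff[OF nz] E_mult[OF nz] E_rconst[OF nz])
  show "D (E x (f 2)) = E x (f 2) * (E x (f 3) - E x (f 4) + E x (f 0) - E x (f 1)) + fls_const (\<alpha> 2)"
    using arg_cong[OF ex(3), of "E x"]
    by (simp add: D[symmetric] E_add[OF nz] E_diff[OF nz] E_mult[OF nz] E_rconst[OF nz])
  show "D (E x (f 3)) = E x (f 3) * (E x (f 4) - E x (f 0) + E x (f 1) - E x (f 2)) + fls_const (\<alpha> 3)"
    using arg_cong[OF ex(4), of "E x"]
    by (simp add: D[symmetric] E_add[OF nz] E_diff[OF nz] E_mult[OF nz] E_rconst[OF nz])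
  show "D (E x (f 4)) = E x (f 4) * (E x (f 0) - E x (f 1) + E x (f 2) - E x (f 3)) + fls_const (\<alpha> 4)"
    using arg_cong[OF ex(5), of "E x"]
    by (simp add: D[symmetric] E_add[OF nz] E_diff[OF nz] E_mult[OF nz] E_rconst[OF nz])
  show "E x (f 0) + E x (f 1) + E x (f 2) + E x (f 3) + E x (f 4) = x"
    using s by (simp add: E_add[OF nz] E_tvar[OF nz])
qed

lemma riccati_local:
  fixes h Y :: "complex fls" and \<sigma> c :: complex
  assumes eq: "fls_deriv h = h * (Y + fls_const \<sigma> * h) + fls_const c"
    and Y: "\<forall>k<0. Y $$ k = 0" and s: "\<sigma> \<noteq> 0"
  shows "(\<forall>k < -1. h $$ k = 0) \<and> - h $$ (-1) = \<sigma> * h $$ (-1) * h $$ (-1)"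
proof -
  have coef: "(fls_deriv h) $$ n = (h * Y) $$ n + \<sigma> * (h * h) $$ n + (fls_const c) $$ n" for n
    by (simp only: eq distrib_left fls_plus_nth mult.left_commute[of h "fls_const \<sigma>"] fls_mult_const_nth(1))
  have low: "\<forall>k < -1. h $$ k = 0"
  proof (rule ccontr)
    assume "\<not> (\<forall>k < -1. h $$ k = 0)"
    then obtain k where k: "k < -1" "h $$ k \<noteq> 0" by auto
    then have h0: "h \<noteq> 0" by auto
    define d where "d = fls_subdegree h"
    have d: "d < -1" using fls_subdegree_leI[OF k(2)] k(1) unfolding d_def by linarith
    have lowh: "\<forall>k<d. h $$ k = 0" unfolding d_def by simp
    have hd: "h $$ d \<noteq> 0" using h0 unfolding d_def by simp
    have "(fls_deriv h) $$ (d + d) = of_int (d + d + 1) * h $$ (d + d + 1)" by simp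
    moreover have "h $$ (d + d + 1) = 0" using lowh d by simp
    moreover have "(h * Y) $$ (d + d) = 0" using prod_low(2)[OF lowh Y, of "d + d"] d by simp
    moreover have "(h * h) $$ (d + d) = h $$ d * h $$ d" using prod_low(1)[OF lowh lowh] .
    moreover have "(fls_const c) $$ (d + d) = 0" using d by simp
    ultimately have "\<sigma> * (h $$ d * h $$ d) = 0" using coef[of "d + d"] by simp
    then show False using s hd by simp
  qed
  have "(fls_deriv h) $$ (-2) = - h $$ (-1)" by simp
  moreover have "(h * Y) $$ (-2) = 0" using prod_low(2)[OF low Y, of "-2"] by simp
  moreover have "(h * h) $$ (-1 + -1) = h $$ (-1) * h $$ (-1)" using prod_low(1)[OF low low] .
  moreover have "(fls_const c) $$ (-2) = 0" by simp
  ultimately have "- h $$ (-1) = \<sigma> * (h $$ (-1) * h $$ (-1))" using coef[of "-2"] by simp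
  then show ?thesis using low by (simp add: mult.assoc)
qed

definition al :: "nat \<Rightarrow> complex" where "al = (\<lambda>j::nat. if j < 3 then (1/3 :: complex) else 0)"

definition t3 :: ratfun where "t3 = rconst (1/3) * tvar"

lemma al_vals: "al 0 = 1/3" "al 1 = 1/3" "al 2 = 1/3" "al 3 = 0" "al 4 = 0"
  by (simp_all add: al_def)

lemma E_t3: "nzx x \<Longrightarrow> E x t3 = fls_const (1/3) * x"
  by (simp add: t3_def E_mult E_rconst E_tvar)

lemma E_inf_t3: "E fls_X_inv t3 = T3"
  by (simp add: E_t3 nzx_inf T3_def)

lemma pole_iff: "pole_at_inf f \<longleftrightarrow> (\<exists>k<0. (E fls_X_inv f) $$ k \<noteq> 0)"
  using E_inf_pole E_inf_regular unfolding regular_at_inf_def by blast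

lemma reg_iff: "regular_at_inf f \<longleftrightarrow> (\<forall>k<0. (E fls_X_inv f) $$ k = 0)"
  using pole_iff unfolding regular_at_inf_def by blast

lemma Einf_eq_t3: "E fls_X_inv f = T3 \<Longrightarrow> f = t3"
  using E_inj[OF nzx_inf, of f t3] E_inf_t3 by simp

lemma Einf_eq_0: "E fls_X_inv f = 0 \<Longrightarrow> f = 0"
  using E_eq0[OF nzx_inf] by blast

lemma xz_reg: "\<forall>k<0. (fls_const c * xz z) $$ k = 0" "\<forall>k<0. (xz z) $$ k = 0"
  by (simp_all add: xz_def)

lemma inf_eqs:
  assumes sol: "A4_rational_solution al f"
  defines "F \<equiv> \<lambda>j. E fls_X_inv (f j)"
  shows "Dinf (F 0) = F 0 * (F 1 - F 2 + F 3 - F 4) + fls_const (1/3)"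
    "Dinf (F 1) = F 1 * (F 2 - F 3 + F 4 - F 0) + fls_const (1/3)"
    "Dinf (F 2) = F 2 * (F 3 - F 4 + F 0 - F 1) + fls_const (1/3)"
    "Dinf (F 3) = F 3 * (F 4 - F 0 + F 1 - F 2) + fls_const 0"
    "Dinf (F 4) = F 4 * (F 0 - F 1 + F 2 - F 3) + fls_const 0"
    "F 0 + F 1 + F 2 + F 3 + F 4 = fls_X_inv"
  using transfer[OF nzx_inf E_inf_rderiv sol] unfolding F_def al_vals by simp_all

lemma fin_eqs:
  fixes z :: complex
  assumes sol: "A4_rational_solution al f"
  defines "F \<equiv> \<lambda>j. E (xz z) (f j)"
  shows "fls_deriv (F 0) = F 0 * (F 1 - F 2 + F 3 - F 4) + fls_const (1/3)"
    "fls_deriv (F 1) = F 1 * (F 2 - F 3 + F 4 - F 0) + fls_const (1/3)"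
    "fls_deriv (F 2) = F 2 * (F 3 - F 4 + F 0 - F 1) + fls_const (1/3)"
    "fls_deriv (F 3) = F 3 * (F 4 - F 0 + F 1 - F 2) + fls_const 0"
    "fls_deriv (F 4) = F 4 * (F 0 - F 1 + F 2 - F 3) + fls_const 0"
    "F 0 + F 1 + F 2 + F 3 + F 4 = xz z"
  using transfer[OF nzx_fin E_fin_rderiv sol] unfolding F_def al_vals by simp_all

lemma fin_good:
  assumes sol: "A4_rational_solution al f" and that: "j < 5"
  shows "good (E (xz z) (f j))"
proof -
  note e = fin_eqs[OF sol, of z]
  have s: "\<forall>k<0. (E (xz z) (f 0) + E (xz z) (f 1) + E (xz z) (f 2) + E (xz z) (f 3) + E (xz z) (f 4)) $$ k = 0"
    using e(6) xz_reg(2) by simp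
  have "good (E (xz z) (f 0)) \<and> good (E (xz z) (f 1)) \<and> good (E (xz z) (f 2)) \<and>
        good (E (xz z) (f 3)) \<and> good (E (xz z) (f 4))"
    by (rule local_A4[OF e(1-5) s])
  moreover have "j = 0 \<or> j = 1 \<or> j = 2 \<or> j = 3 \<or> j = 4" using that by arith
  ultimately show ?thesis by auto
qed

lemma residues_int:
  assumes "\<forall>z. good (E (xz z) g)"
  shows "(E fls_X_inv g) $$ 1 \<in> \<int>"
proof -
  have "\<forall>z. \<forall>k < -1. (E (xz z) g) $$ k = 0" using assms by (simp add: good_def)
  from residue_sum[OF this] show ?thesis
    using assms by (simp add: good_def Ints_sum)
qed

lemma not_int_43: "(-4/3 :: complex) \<notin> \<int>"
proof
  assume "(-4/3 :: complex) \<in> \<int>"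
  then obtain n :: int where "(-4/3 :: complex) = of_int n" by (auto elim: Ints_cases)
  then have "(of_int (-4) :: complex) = of_int (3 * n)" by (simp add: field_simps)
  then have "-4 = 3 * n" by (simp only: of_int_eq_iff)
  then show False by presburger
qed

lemma not_int_53: "(-5/3 :: complex) \<notin> \<int>"
proof
  assume "(-5/3 :: complex) \<in> \<int>"
  then obtain n :: int where "(-5/3 :: complex) = of_int n" by (auto elim: Ints_cases)
  then have "(of_int (-5) :: complex) = of_int (3 * n)" by (simp add: field_simps)
  then have "-5 = 3 * n" by (simp only: of_int_eq_iff)
  then show False by presburger
qed

abbreviation Fi :: "(nat \<Rightarrow> ratfun) \<Rightarrow> nat \<Rightarrow> complex fls" where
  "Fi f j \<equiv> E fls_X_inv (f j)"

lemma case_i0: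
  assumes sol: "A4_rational_solution al f"
    and p: "pole_at_inf (f 0)" "pole_at_inf (f 1)" "pole_at_inf (f 2)"
    and r: "regular_at_inf (f 3)" "regular_at_inf (f 4)"
  shows "f 0 = t3 \<and> f 1 = t3 \<and> f 2 = t3 \<and> f 3 = 0 \<and> f 4 = 0"
proof -
  note e = inf_eqs[OF sol]
  have I: "infsys (Fi f 0) (Fi f 1) (Fi f 2) (Fi f 3) (Fi f 4) (1/3) (1/3) (1/3) 0 0"
    unfolding infsys_def using e p r by (simp add: pole_iff reg_iff)
  have "Fi f 0 = T3 \<and> Fi f 1 = T3 \<and> Fi f 2 = T3 \<and> Fi f 3 = 0 \<and> Fi f 4 = 0"
    by (rule infsys.case0[OF I]) simp_all
  then show ?thesis using Einf_eq_t3 Einf_eq_0 by blast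
qed

lemma case_i2:
  assumes sol: "A4_rational_solution al f"
    and p: "pole_at_inf (f 2)" "pole_at_inf (f 3)" "pole_at_inf (f 4)"
    and r: "regular_at_inf (f 0)" "regular_at_inf (f 1)"
  shows False
proof -
  note e = inf_eqs[OF sol]
  have s: "Fi f 2 + Fi f 3 + Fi f 4 + Fi f 0 + Fi f 1 = fls_X_inv"
    using e(6) by (simp add: ac_simps)
  have I: "infsys (Fi f 2) (Fi f 3) (Fi f 4) (Fi f 0) (Fi f 1) (1/3) 0 0 (1/3) (1/3)"
    unfolding infsys_def using e s p r by (simp add: pole_iff reg_iff)
  have "(Fi f 2) $$ 1 = 0 - 0 - 3 * (1/3) - 1/3" by (rule infsys.A1[OF I])
  then have v: "(Fi f 2) $$ 1 = -4/3" by simp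
  have "(Fi f 2) $$ 1 \<in> \<int>" using fin_good[OF sol, of 2] by (intro residues_int) auto
  then show False using v not_int_43 by simp
qed

lemma case_i3:
  assumes sol: "A4_rational_solution al f"
    and p: "pole_at_inf (f 3)" "pole_at_inf (f 4)" "pole_at_inf (f 0)"
    and r: "regular_at_inf (f 1)" "regular_at_inf (f 2)"
  shows False
proof -
  note e = inf_eqs[OF sol]
  have s: "Fi f 3 + Fi f 4 + Fi f 0 + Fi f 1 + Fi f 2 = fls_X_inv"
    using e(6) by (simp add: ac_simps)
  have I: "infsys (Fi f 3) (Fi f 4) (Fi f 0) (Fi f 1) (Fi f 2) 0 0 (1/3) (1/3) (1/3)"
    unfolding infsys_def using e s p r by (simp add: pole_iff reg_iff)
  have "(Fi f 3) $$ 1 = 0 - 1/3 - 3 * (1/3) - 1/3" by (rule infsys.A1[OF I])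
  then have v: "(Fi f 3) $$ 1 = -5/3" by simp
  have "(Fi f 3) $$ 1 \<in> \<int>" using fin_good[OF sol, of 3] by (intro residues_int) auto
  then show False using v not_int_53 by simp
qed

lemma reg_tt: "\<forall>k<0. (E (xz z) (tvar - t3 - t3)) $$ k = 0"
proof -
  have "E (xz z) (tvar - t3 - t3) = xz z - fls_const (1/3) * xz z - fls_const (1/3) * xz z"
    by (simp only: E_diff[OF nzx_fin] E_t3[OF nzx_fin] E_tvar[OF nzx_fin])
  then show ?thesis by (simp add: xz_def)
qed

lemma case_i1:
  assumes sol: "A4_rational_solution al f"
    and p: "pole_at_inf (f 1)" "pole_at_inf (f 2)" "pole_at_inf (f 3)"
    and r: "regular_at_inf (f 4)" "regular_at_inf (f 0)"
  shows False
proof -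
  note e = inf_eqs[OF sol]
  have s: "Fi f 1 + Fi f 2 + Fi f 3 + Fi f 4 + Fi f 0 = fls_X_inv"
    using e(6) by (simp add: ac_simps)
  have I: "infsys (Fi f 1) (Fi f 2) (Fi f 3) (Fi f 4) (Fi f 0) (1/3) (1/3) 0 0 (1/3)"
    unfolding infsys_def using e s p r by (simp add: pole_iff reg_iff)
  have "Fi f 1 = T3 \<and> Fi f 2 = T3 \<and> Fi f 4 = 0"
    by (rule infsys.case1[OF I]) simp_all
  then have f1: "f 1 = t3" and f2: "f 2 = t3" and f4: "f 4 = 0"
    using Einf_eq_t3 Einf_eq_0 by blast+
  have "(Fi f 0) $$ 1 = - 3 * (1/3)" using infsys.H01[OF I] by blast
  then have v: "(Fi f 0) $$ 1 = -1" by simp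
  note rs = A4_expand[OF sol]
  have f30: "f 3 + f 0 = tvar - t3 - t3" using rs(6) f1 f2 f4 by (simp add: algebra_simps)
  have loc: "(\<forall>k < -1. (E (xz z) (f 0)) $$ k = 0) \<and>
      (Re ((E (xz z) (f 0)) $$ (-1)) \<ge> 0)" for z
  proof -
    let ?h = "E (xz z) (f 0)"
    let ?Y = "E (xz z) (tvar - t3 - t3)"
    have eq: "fls_deriv ?h = ?h * (E (xz z) (f 3)) + fls_const (1/3)"
      using fin_eqs(1)[OF sol, of z] f1 f2 f4 by simp
    have "E (xz z) (f 3) = ?Y - ?h"
      using arg_cong[OF f30, of "E (xz z)"] by (simp add: E_add[OF nzx_fin] algebra_simps)
    then have eq2: "fls_deriv ?h = ?h * (?Y + fls_const (-1) * ?h) + fls_const (1/3)"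
      using eq by simp
    have R: "(\<forall>k < -1. ?h $$ k = 0) \<and> - ?h $$ (-1) = (-1) * ?h $$ (-1) * ?h $$ (-1)"
      by (rule riccati_local[OF eq2 reg_tt]) simp
    then have "?h $$ (-1) * (?h $$ (-1) - 1) = 0" by (simp add: algebra_simps)
    then have "?h $$ (-1) = 0 \<or> ?h $$ (-1) = 1" by simp
    then show ?thesis using R by auto
  qed
  have "(Fi f 0) $$ 1 = (\<Sum>z\<in>{z. poly (snd (quot_of_fract (f 0))) z = 0}. (E (xz z) (f 0)) $$ (-1))"
    using loc by (intro residue_sum) blast
  then have "Re ((Fi f 0) $$ 1) = (\<Sum>z\<in>{z. poly (snd (quot_of_fract (f 0))) z = 0}. Re ((E (xz z) (f 0)) $$ (-1)))"
    by (simp add: Re_sum)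
  also have "\<dots> \<ge> 0" using loc by (intro sum_nonneg) blast
  finally show False using v by simp
qed

lemma case_i4:
  assumes sol: "A4_rational_solution al f"
    and p: "pole_at_inf (f 4)" "pole_at_inf (f 0)" "pole_at_inf (f 1)"
    and r: "regular_at_inf (f 2)" "regular_at_inf (f 3)"
  shows False
proof -
  note e = inf_eqs[OF sol]
  have s: "Fi f 4 + Fi f 0 + Fi f 1 + Fi f 2 + Fi f 3 = fls_X_inv"
    using e(6) by (simp add: ac_simps)
  have I: "infsys (Fi f 4) (Fi f 0) (Fi f 1) (Fi f 2) (Fi f 3) 0 (1/3) (1/3) (1/3) 0"
    unfolding infsys_def using e s p r by (simp add: pole_iff reg_iff)
  have "Fi f 0 = T3 \<and> Fi f 1 = T3 \<and> Fi f 3 = 0"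
    by (rule infsys.case4[OF I]) simp_all
  then have f0: "f 0 = t3" and f1: "f 1 = t3" and f3: "f 3 = 0"
    using Einf_eq_t3 Einf_eq_0 by blast+
  have "(Fi f 2) $$ 1 = 3 * (1/3)" using infsys.G01[OF I] by blast
  then have v: "(Fi f 2) $$ 1 = 1" by simp
  note rs = A4_expand[OF sol]
  have f42: "f 4 + f 2 = tvar - t3 - t3" using rs(6) f0 f1 f3 by (simp add: algebra_simps)
  have loc: "(\<forall>k < -1. (E (xz z) (f 2)) $$ k = 0) \<and>
      (Re ((E (xz z) (f 2)) $$ (-1)) \<le> 0)" for z
  proof -
    let ?h = "E (xz z) (f 2)"
    let ?Y = "E (xz z) (tvar - t3 - t3)"
    have eq: "fls_deriv ?h = ?h * (- E (xz z) (f 4)) + fls_const (1/3)"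
      using fin_eqs(3)[OF sol, of z] f0 f1 f3 by simp
    have "- E (xz z) (f 4) = - ?Y + ?h"
      using arg_cong[OF f42, of "E (xz z)"] by (simp add: E_add[OF nzx_fin] algebra_simps)
    then have eq2: "fls_deriv ?h = ?h * (- ?Y + fls_const 1 * ?h) + fls_const (1/3)"
      using eq by simp
    have regY: "\<forall>k<0. (- ?Y) $$ k = 0" using reg_tt by simp
    have R: "(\<forall>k < -1. ?h $$ k = 0) \<and> - ?h $$ (-1) = 1 * ?h $$ (-1) * ?h $$ (-1)"
      by (rule riccati_local[OF eq2 regY]) simp
    then have "?h $$ (-1) * ?h $$ (-1) = - ?h $$ (-1)" by simp
    then have "?h $$ (-1) * ?h $$ (-1) + ?h $$ (-1) = 0" by (simp add: add_eq_0_iff2)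
    then have "?h $$ (-1) * (?h $$ (-1) + 1) = 0" by (simp add: distrib_left)
    then have "?h $$ (-1) = 0 \<or> ?h $$ (-1) + 1 = 0" by simp
    then have "?h $$ (-1) = 0 \<or> ?h $$ (-1) = -1" by (auto simp: add_eq_0_iff2)
    then show ?thesis using R by auto
  qed
  have "(Fi f 2) $$ 1 = (\<Sum>z\<in>{z. poly (snd (quot_of_fract (f 2))) z = 0}. (E (xz z) (f 2)) $$ (-1))"
    using loc by (intro residue_sum) blast
  then have "Re ((Fi f 2) $$ 1) = (\<Sum>z\<in>{z. poly (snd (quot_of_fract (f 2))) z = 0}. Re ((E (xz z) (f 2)) $$ (-1)))"
    by (simp add: Re_sum)
  also have "\<dots> \<le> 0" using loc by (intro sum_nonpos) blast
  finally show False using v by simp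
qed

lemma rderiv_t3: "rderiv t3 = rconst (1/3)"
proof (rule E_inj[OF nzx_inf])
  have "Dinf T3 = fls_const (1/3)"
    by (simp add: T3_def Dinf_mult Dinf_const Dinf_Xinv)
  then show "E fls_X_inv (rderiv t3) = E fls_X_inv (rconst (1/3))"
    by (simp add: E_inf_rderiv E_inf_t3 E_rconst[OF nzx_inf])
qed

lemma rderiv_0: "rderiv 0 = 0"
proof (rule E_eq0[OF nzx_inf])
  show "E fls_X_inv (rderiv 0) = 0" by (simp add: E_inf_rderiv Dinf_def)
qed

lemma rconst_0: "rconst 0 = 0"
  by (rule E_eq0[OF nzx_inf]) (simp add: E_rconst[OF nzx_inf])

lemma t3_sum: "t3 + t3 + t3 = tvar"
proof (rule E_inj[OF nzx_inf])
  have "fls_const (1/3) * fls_X_inv + fls_const (1/3) * fls_X_inv + fls_const (1/3) * fls_X_inv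
     = (fls_const (1/3) + fls_const (1/3) + fls_const (1/3)) * (fls_X_inv :: complex fls)"
    by (simp add: algebra_simps)
  also have "fls_const (1/3) + fls_const (1/3) + fls_const (1/3) = (1 :: complex fls)"
    by (simp add: fls_plus_const)
  finally show "E fls_X_inv (t3 + t3 + t3) = E fls_X_inv tvar"
    by (simp only: E_add[OF nzx_inf] E_t3[OF nzx_inf] E_tvar[OF nzx_inf] mult_1)
qed

lemma pole_t3: "pole_at_inf t3"
  unfolding pole_iff E_inf_t3 by (rule exI[of _ "-1"]) (simp add: T3_nth)

lemma reg_0: "regular_at_inf 0"
  unfolding reg_iff by simp

lemma five_cases: "(j::nat) < 5 \<Longrightarrow> j = 0 \<or> j = 1 \<or> j = 2 \<or> j = 3 \<or> j = 4"
  by arith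

theorem lemma3p5:
  fixes f :: "nat \<Rightarrow> ratfun"
  defines "\<alpha> \<equiv> (\<lambda>j::nat. if j < 3 then (1/3 :: complex) else 0)"
  shows "(A4_rational_solution \<alpha> f \<and> type_B f) \<longleftrightarrow>
    (\<forall>j<5. f j = (if j < 3 then rconst (1/3) * tvar else 0))"
proof -
  have aal: "\<alpha> = al" by (simp add: \<alpha>_def al_def)
  have t3e: "rconst (1/3) * tvar = t3" by (simp add: t3_def)
  show ?thesis
  proof
    assume A: "A4_rational_solution \<alpha> f \<and> type_B f"
    then have sol: "A4_rational_solution al f" using aal by simp
    obtain i where i: "i < 5" and pi: "pole_at_inf (f i)" "pole_at_inf (f ((i+1) mod 5))"
      "pole_at_inf (f ((i+2) mod 5))" and ri: "regular_at_inf (f ((i+3) mod 5))"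
      "regular_at_inf (f ((i+4) mod 5))"
      using A unfolding type_B_def by blast
    have "i = 0 \<or> i = 1 \<or> i = 2 \<or> i = 3 \<or> i = 4" using five_cases[OF i] .
    moreover have False if "i = 1"
      using case_i1[OF sol pi[unfolded that mods5] ri[unfolded that mods5]] .
    moreover have False if "i = 2"
      using case_i2[OF sol pi[unfolded that mods5] ri[unfolded that mods5]] .
    moreover have False if "i = 3"
      using case_i3[OF sol pi[unfolded that mods5] ri[unfolded that mods5]] .
    moreover have False if "i = 4"
      using case_i4[OF sol pi[unfolded that mods5] ri[unfolded that mods5]] .
    ultimately have "i = 0" by blast
    have fv: "f 0 = t3 \<and> f 1 = t3 \<and> f 2 = t3 \<and> f 3 = 0 \<and> f 4 = 0"
      using case_i0[OF sol pi[unfolded \<open>i = 0\<close> mods5] ri[unfolded \<open>i = 0\<close> mods5]] .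
    show "\<forall>j<5. f j = (if j < 3 then rconst (1/3) * tvar else 0)"
    proof (intro allI impI)
      fix j :: nat assume "j < 5"
      then show "f j = (if j < 3 then rconst (1/3) * tvar else 0)"
        using five_cases[of j] fv t3e by auto
    qed
  next
    assume B: "\<forall>j<5. f j = (if j < 3 then rconst (1/3) * tvar else 0)"
    have f0: "f 0 = t3" and f1: "f 1 = t3" and f2: "f 2 = t3" and f3: "f 3 = 0" and f4: "f 4 = 0"
      using B t3e by auto
    have av: "\<alpha> 0 = 1/3" "\<alpha> 1 = 1/3" "\<alpha> 2 = 1/3" "\<alpha> 3 = 0" "\<alpha> 4 = 0"
      by (simp_all add: \<alpha>_def)
    have sum: "(\<Sum>j<5. f j) = tvar"
    proof -
      have "{..<5::nat} = {0,1,2,3,4}" by auto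
      then show ?thesis using f0 f1 f2 f3 f4 t3_sum by (simp add: add.assoc)
    qed
    have eqs: "\<forall>j<5. rderiv (f j) =
        f j * (f ((j+1) mod 5) - f ((j+2) mod 5) + f ((j+3) mod 5) - f ((j+4) mod 5))
        + rconst (\<alpha> j)"
    proof (intro allI impI)
      fix j :: nat assume j: "j < 5"
      have "j = 0 \<or> j = 1 \<or> j = 2 \<or> j = 3 \<or> j = 4" using five_cases[OF j] .
      then show "rderiv (f j) =
        f j * (f ((j+1) mod 5) - f ((j+2) mod 5) + f ((j+3) mod 5) - f ((j+4) mod 5))
        + rconst (\<alpha> j)"
      proof (elim disjE)
        assume "j = 0" then show ?thesis
          by (simp only: mods5 f0 f1 f2 f3 f4 av) (simp add: rderiv_t3)
      next
        assume "j = 1" then show ?thesis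
          by (simp only: mods5 f0 f1 f2 f3 f4 av) (simp add: rderiv_t3)
      next
        assume "j = 2" then show ?thesis
          by (simp only: mods5 f0 f1 f2 f3 f4 av) (simp add: rderiv_t3)
      next
        assume "j = 3" then show ?thesis
          by (simp only: mods5 f0 f1 f2 f3 f4 av) (simp add: rderiv_0 rconst_0)
      next
        assume "j = 4" then show ?thesis
          by (simp only: mods5 f0 f1 f2 f3 f4 av) (simp add: rderiv_0 rconst_0)
      qed
    qed
    have "type_B f"
      unfolding type_B_def
      by (rule exI[of _ 0]) (simp only: mods5 f0 f1 f2 f3 f4, simp add: pole_t3 reg_0)
    then show "A4_rational_solution \<alpha> f \<and> type_B f"
      using eqs sum by (simp add: A4_rational_solution_def)
  qed
qed

end
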